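(* Let $L\ge2$, $\mathcal L=\llbracket1,L\rrbracket$, let $X_1,\dots,X_L$ be independent binary random variables with distributions $q_{X_l}$, let $q_{Z|X_{\mathcal L}}$ be a memoryless channel with finite output alphabet and $q_Z$ the induced output distribution. Fix $\xi>0$, $\delta^*_{\mathcal L}(N)=\log(2^L+3)\sqrt{\tfrac2N(L+\log N)}$, $\epsilon_2=2(\delta^*_{\mathcal L}(N)+\xi)$, $r_{X_l}=N(H(X_l|ZX_{1:l-1})-\epsilon_2/2)$. For each $l$, a hash function $G_{X_l}:\{0,1\}^N\to\{0,1\}^{r_{X_l}}$ is chosen uniformly at random (independently over $l$) from a two-universal family, and an encoder $e^{X_l}_N$ maps $N(H(X_l)+\epsilon_2/2)$ bits into $\{0,1\}^N$ such that with uniform input its output distribution is within variational distance $\delta(N)$ of $\prod_{i=1}^Nq_{X_l}$. The scheme runs over $k$ blocks: Block 1: $\widetilde X_{l,1}^{1:N}=e^{X_l}_N(E_{l,1})$ with uniform input; Block $i\in\llbracket2,k\rrbracket$: $\widetilde E_{l,i}=G_{X_l}(\widetilde X_{l,i-1}^{1:N})$, $\widetilde X_{l,i}^{1:N}=e^{X_l}_N(\widetilde E_{l,i}\|E_{l,i})$ with $E_{l,i}$ a uniform string of $N(I(X_l;ZX_{1:l-1})+\epsilon_2)$ bits; in each block $\widetilde Z_i^{1:N}$ is the channel output on $(\widetilde X_{l,i}^{1:N})_l$. All fresh randomness, channel noise of distinct blocks and hash choices are mutually independent, and $\widetilde p$ denotes induced distributions (including the random hash choice). Let $\delta^{*(0)}(N)=2/N+2^{L/2}2^{-N\xi/2}$,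 $\delta^*_j(N)=L(\delta(N)+\delta^{*(0)}(N))\frac{L^j-1}{L-1}+L^{j+1}\delta(N)$, and $\delta^{*(2)}_k(N)=(2^{k-1}-1)(4\delta^*_{k-1}(N)+2\delta^{*(0)}(N))$. Then $$\mathbb V\big(\widetilde p_{Z_{1:k}^{1:N}},\,q_{Z^{1:kN}}\big)\le(k-1)\delta^{*(2)}_k(N)+k\,\delta^*_k(N),$$ where $\widetilde p_{Z_{1:k}^{1:N}}$ is the joint distribution of all $k$ blocks of outputs and $q_{Z^{1:kN}}=\prod_{i=1}^{kN}q_Z$.
   Context: $\mathbb V(p,q)=\sum_x|p(x)-q(x)|$, $\log$ base 2, $X_{1:l-1}=(X_1,\dots,X_{l-1})$, $\|$ denotes concatenation; all lengths assumed to be integers. Two-universal hash families are in the sense of Carter–Wegman. *)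

theory Defs
  imports "HOL-Probability.Probability"
begin

fun seq_pmf :: "'a pmf list \<Rightarrow> 'a list pmf" where
  "seq_pmf [] = return_pmf []"
| "seq_pmf (p # ps) = bind_pmf p (\<lambda>x. map_pmf (\<lambda>xs. x # xs) (seq_pmf ps))"

definition iid :: "'a pmf \<Rightarrow> nat \<Rightarrow> 'a list pmf" where
  "iid p n = seq_pmf (replicate n p)"

definition unif_bits :: "nat \<Rightarrow> bool list pmf" where
  "unif_bits n = pmf_of_set {xs. length xs = n}"

text \<open>Variational distance V(p,q) = sum_x |p(x) - q(x)| (no factor 1/2).\<close>
definition vdist :: "'a pmf \<Rightarrow> 'a pmf \<Rightarrow> real" where
  "vdist p q = (\<Sum>\<^sub>\<infinity>x. \<bar>pmf p x - pmf q x\<bar>)"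

definition shannon_H :: "'a pmf \<Rightarrow> real" where
  "shannon_H p = - (\<Sum>x\<in>set_pmf p. pmf p x * log 2 (pmf p x))"

definition cond_entropy_pmf :: "('a \<times> 'b) pmf \<Rightarrow> real" where
  "cond_entropy_pmf p = shannon_H p - shannon_H (map_pmf snd p)"

definition mutual_info_pmf :: "('a \<times> 'b) pmf \<Rightarrow> real" where
  "mutual_info_pmf p = shannon_H (map_pmf fst p) + shannon_H (map_pmf snd p) - shannon_H p"

text \<open>Users are indexed 0..L-1 (paper: 1..L). The inputs X_0..X_{L-1} are independent,
  X_l ~ qX l; the channel W maps the input tuple (as a list of length L) to an output distribution.\<close>
definition joint_XZ :: "nat \<Rightarrow> (nat \<Rightarrow> bool pmf) \<Rightarrow> (bool list \<Rightarrow> 'z pmf) \<Rightarrow> (bool list \<times> 'z) pmf" where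
  "joint_XZ L qX W = bind_pmf (seq_pmf (map qX [0..<L])) (\<lambda>xs. map_pmf (\<lambda>z. (xs, z)) (W xs))"

definition qZ :: "nat \<Rightarrow> (nat \<Rightarrow> bool pmf) \<Rightarrow> (bool list \<Rightarrow> 'z pmf) \<Rightarrow> 'z pmf" where
  "qZ L qX W = map_pmf snd (joint_XZ L qX W)"

text \<open>Joint distribution of (X_l, (Z, X_{1:l-1})) (0-indexed: X_l with the earlier X_0..X_{l-1}).\<close>
definition XZX :: "nat \<Rightarrow> (nat \<Rightarrow> bool pmf) \<Rightarrow> (bool list \<Rightarrow> 'z pmf) \<Rightarrow> nat \<Rightarrow> (bool \<times> ('z \<times> bool list)) pmf" where
  "XZX L qX W l = map_pmf (\<lambda>(xs, z). (xs ! l, (z, take l xs))) (joint_XZ L qX W)"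

definition two_universal :: "nat \<Rightarrow> nat \<Rightarrow> (bool list \<Rightarrow> bool list) set \<Rightarrow> bool" where
  "two_universal n r H \<longleftrightarrow> finite H \<and> H \<noteq> {} \<and>
     (\<forall>h\<in>H. \<forall>x. length x = n \<longrightarrow> length (h x) = r) \<and>
     (\<forall>x y. length x = n \<longrightarrow> length y = n \<longrightarrow> x \<noteq> y \<longrightarrow>
        real (card {h\<in>H. h x = h y}) \<le> real (card H) / 2 ^ r)"

text \<open>Memoryless channel applied letterwise to N uses; Xs is the list of the L input strings.\<close>
definition chanN :: "(bool list \<Rightarrow> 'z pmf) \<Rightarrow> nat \<Rightarrow> bool list list \<Rightarrow> 'z list pmf" where
  "chanN W N Xs = seq_pmf (map (\<lambda>j. W (map (\<lambda>x. x ! j) Xs)) [0..<N])"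

definition first_block :: "nat \<Rightarrow> (nat \<Rightarrow> bool list \<Rightarrow> bool list) \<Rightarrow> (nat \<Rightarrow> nat) \<Rightarrow> bool list list pmf" where
  "first_block L e a = seq_pmf (map (\<lambda>l. map_pmf (e l) (unif_bits (a l))) [0..<L])"

definition next_block :: "nat \<Rightarrow> (nat \<Rightarrow> bool list \<Rightarrow> bool list) \<Rightarrow> (nat \<Rightarrow> nat)
    \<Rightarrow> (bool list \<Rightarrow> bool list) list \<Rightarrow> bool list list \<Rightarrow> bool list list pmf" where
  "next_block L e m G Xprev =
     seq_pmf (map (\<lambda>l. map_pmf (\<lambda>E. e l ((G ! l) (Xprev ! l) @ E)) (unif_bits (m l))) [0..<L])"

fun run_blocks :: "nat \<Rightarrow> (nat \<Rightarrow> bool list \<Rightarrow> bool list) \<Rightarrow> (nat \<Rightarrow> nat) \<Rightarrow> (bool list \<Rightarrow> 'z pmf)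
    \<Rightarrow> nat \<Rightarrow> (bool list \<Rightarrow> bool list) list \<Rightarrow> nat \<Rightarrow> bool list list \<Rightarrow> 'z list list pmf" where
  "run_blocks L e m W N G 0 Xprev = return_pmf []"
| "run_blocks L e m W N G (Suc n) Xprev =
     bind_pmf (next_block L e m G Xprev) (\<lambda>X.
     bind_pmf (chanN W N X) (\<lambda>Z.
     map_pmf (\<lambda>Zs. Z # Zs) (run_blocks L e m W N G n X)))"

definition scheme_output :: "nat \<Rightarrow> (nat \<Rightarrow> bool list \<Rightarrow> bool list) \<Rightarrow> (nat \<Rightarrow> nat) \<Rightarrow> (nat \<Rightarrow> nat)
    \<Rightarrow> (bool list \<Rightarrow> 'z pmf) \<Rightarrow> nat \<Rightarrow> (nat \<Rightarrow> (bool list \<Rightarrow> bool list) set) \<Rightarrow> nat \<Rightarrow> 'z list pmf" where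
  "scheme_output L e a m W N Hf k =
     bind_pmf (seq_pmf (map (\<lambda>l. pmf_of_set (Hf l)) [0..<L])) (\<lambda>G.
     bind_pmf (first_block L e a) (\<lambda>X1.
     bind_pmf (chanN W N X1) (\<lambda>Z1.
     map_pmf (\<lambda>Zs. concat (Z1 # Zs)) (run_blocks L e m W N G (k - 1) X1))))"

definition delta_star_L :: "nat \<Rightarrow> nat \<Rightarrow> real" where
  "delta_star_L L N = log 2 (2 ^ L + 3) * sqrt (2 / real N * (real L + log 2 (real N)))"

definition eps2 :: "nat \<Rightarrow> nat \<Rightarrow> real \<Rightarrow> real" where
  "eps2 L N \<xi> = 2 * (delta_star_L L N + \<xi>)"

definition delta0 :: "nat \<Rightarrow> nat \<Rightarrow> real \<Rightarrow> real" where
  "delta0 L N \<xi> = 2 / real N + 2 powr (real L / 2) * 2 powr (- real N * \<xi> / 2)"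

text \<open>delta here is the value delta(N) of the encoders' approximation error.\<close>
definition delta_star :: "nat \<Rightarrow> nat \<Rightarrow> real \<Rightarrow> real \<Rightarrow> nat \<Rightarrow> real" where
  "delta_star L N \<xi> \<delta> j =
     real L * (\<delta> + delta0 L N \<xi>) * (real L ^ j - 1) / (real L - 1) + real L ^ (j + 1) * \<delta>"

definition delta2 :: "nat \<Rightarrow> nat \<Rightarrow> real \<Rightarrow> real \<Rightarrow> nat \<Rightarrow> real" where
  "delta2 L N \<xi> \<delta> k = (2 ^ (k - 1) - 1) * (4 * delta_star L N \<xi> \<delta> (k - 1) + 2 * delta0 L N \<xi>)"

end

theory Submission
  imports Defs
begin

lemma vdist_finite:
  assumes "finite A" "set_pmf p \<subseteq> A" "set_pmf q \<subseteq> A"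
  shows "vdist p q = (\<Sum>x\<in>A. \<bar>pmf p x - pmf q x\<bar>)"
proof -
  have "(\<Sum>\<^sub>\<infinity>x. \<bar>pmf p x - pmf q x\<bar>) = (\<Sum>\<^sub>\<infinity>x\<in>A. \<bar>pmf p x - pmf q x\<bar>)"
  proof (intro infsum_cong_neutral)
    fix x assume "x \<in> UNIV - A"
    then have "pmf p x = 0" "pmf q x = 0" using assms by (auto simp: pmf_eq_0_set_pmf)
    then show "\<bar>pmf p x - pmf q x\<bar> = 0" by simp
  qed auto
  also have "\<dots> = (\<Sum>x\<in>A. \<bar>pmf p x - pmf q x\<bar>)" using assms by simp
  finally show ?thesis by (simp add: vdist_def)
qed

lemma vdist_supp:
  assumes "finite (set_pmf p)" "finite (set_pmf q)"
  shows "vdist p q = (\<Sum>x\<in>set_pmf p \<union> set_pmf q. \<bar>pmf p x - pmf q x\<bar>)"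
  using assms by (intro vdist_finite) auto

lemma vdist_nonneg: "vdist p q \<ge> 0"
  unfolding vdist_def by (intro infsum_nonneg) auto

lemma vdist_sym: "vdist p q = vdist q p"
  unfolding vdist_def by (simp add: abs_minus_commute)

lemma vdist_self[simp]: "vdist p p = 0"
  unfolding vdist_def by simp

lemma vdist_triangle:
  assumes "finite (set_pmf p)" "finite (set_pmf q)" "finite (set_pmf s)"
  shows "vdist p s \<le> vdist p q + vdist q s"
proof -
  let ?A = "set_pmf p \<union> set_pmf q \<union> set_pmf s"
  have "vdist p s = (\<Sum>x\<in>?A. \<bar>pmf p x - pmf s x\<bar>)" using assms by (intro vdist_finite) auto
  also have "\<dots> \<le> (\<Sum>x\<in>?A. \<bar>pmf p x - pmf q x\<bar> + \<bar>pmf q x - pmf s x\<bar>)"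
    by (intro sum_mono) linarith
  also have "\<dots> = (\<Sum>x\<in>?A. \<bar>pmf p x - pmf q x\<bar>) + (\<Sum>x\<in>?A. \<bar>pmf q x - pmf s x\<bar>)"
    by (simp add: sum.distrib)
  also have "\<dots> = vdist p q + vdist q s"
  proof -
    have "vdist p q = (\<Sum>x\<in>?A. \<bar>pmf p x - pmf q x\<bar>)" by (rule vdist_finite) (use assms in auto)
    moreover have "vdist q s = (\<Sum>x\<in>?A. \<bar>pmf q x - pmf s x\<bar>)" by (rule vdist_finite) (use assms in auto)
    ultimately show ?thesis by simp
  qed
  finally show ?thesis .
qed

lemma pmf_bind_finite:
  assumes "finite A" "set_pmf p \<subseteq> A"
  shows "pmf (bind_pmf p K) y = (\<Sum>x\<in>A. pmf p x * pmf (K x) y)"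
  unfolding pmf_bind using assms
  by (subst integral_measure_pmf_real[of A]) (auto simp: mult.commute)

lemma vdist_bind_left:
  assumes fp: "finite (set_pmf p)" and fq: "finite (set_pmf q)"
    and fK: "\<And>x. x \<in> set_pmf p \<union> set_pmf q \<Longrightarrow> finite (set_pmf (K x))"
  shows "vdist (bind_pmf p K) (bind_pmf q K) \<le> vdist p q"
proof -
  define A where "A = set_pmf p \<union> set_pmf q"
  define Y where "Y = (\<Union>x\<in>A. set_pmf (K x))"
  have fA: "finite A" using fp fq by (simp add: A_def)
  have fY: "finite Y" using fA fK by (auto simp: Y_def A_def)
  have "vdist (bind_pmf p K) (bind_pmf q K) = (\<Sum>y\<in>Y. \<bar>pmf (bind_pmf p K) y - pmf (bind_pmf q K) y\<bar>)"
    by (intro vdist_finite fY) (auto simp: Y_def A_def)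
  also have "\<dots> = (\<Sum>y\<in>Y. \<bar>\<Sum>x\<in>A. (pmf p x - pmf q x) * pmf (K x) y\<bar>)"
    using fA by (simp add: pmf_bind_finite[of A] A_def sum_subtractf left_diff_distrib)
  also have "\<dots> \<le> (\<Sum>y\<in>Y. \<Sum>x\<in>A. \<bar>pmf p x - pmf q x\<bar> * pmf (K x) y)"
    by (intro sum_mono order.trans[OF sum_abs]) (simp add: abs_mult)
  also have "\<dots> = (\<Sum>x\<in>A. \<bar>pmf p x - pmf q x\<bar> * (\<Sum>y\<in>Y. pmf (K x) y))"
    by (subst sum.swap) (simp add: sum_distrib_left)
  also have "\<dots> = (\<Sum>x\<in>A. \<bar>pmf p x - pmf q x\<bar>)"
    using fY by (intro sum.cong refl) (subst sum_pmf_eq_1, auto simp: Y_def)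
  also have "\<dots> = vdist p q" using fA by (intro vdist_finite[symmetric]) (auto simp: A_def)
  finally show ?thesis .
qed

lemma vdist_bind_right:
  assumes fp: "finite (set_pmf p)"
    and fK: "\<And>x. x \<in> set_pmf p \<Longrightarrow> finite (set_pmf (K1 x)) \<and> finite (set_pmf (K2 x))"
    and B: "\<And>x. x \<in> set_pmf p \<Longrightarrow> vdist (K1 x) (K2 x) \<le> B"
  shows "vdist (bind_pmf p K1) (bind_pmf p K2) \<le> B"
proof -
  define A where "A = set_pmf p"
  define Y where "Y = (\<Union>x\<in>A. set_pmf (K1 x) \<union> set_pmf (K2 x))"
  have fA: "finite A" using fp by (simp add: A_def)
  have fY: "finite Y" using fA fK by (auto simp: Y_def A_def)
  have "vdist (bind_pmf p K1) (bind_pmf p K2) = (\<Sum>y\<in>Y. \<bar>pmf (bind_pmf p K1) y - pmf (bind_pmf p K2) y\<bar>)"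
    by (intro vdist_finite fY) (auto simp: Y_def A_def)
  also have "\<dots> = (\<Sum>y\<in>Y. \<bar>\<Sum>x\<in>A. pmf p x * (pmf (K1 x) y - pmf (K2 x) y)\<bar>)"
    using fA by (simp add: pmf_bind_finite[of A] A_def sum_subtractf right_diff_distrib)
  also have "\<dots> \<le> (\<Sum>y\<in>Y. \<Sum>x\<in>A. pmf p x * \<bar>pmf (K1 x) y - pmf (K2 x) y\<bar>)"
    by (intro sum_mono order.trans[OF sum_abs]) (simp add: abs_mult)
  also have "\<dots> = (\<Sum>x\<in>A. pmf p x * (\<Sum>y\<in>Y. \<bar>pmf (K1 x) y - pmf (K2 x) y\<bar>))"
    by (subst sum.swap) (simp add: sum_distrib_left)
  also have "\<dots> = (\<Sum>x\<in>A. pmf p x * vdist (K1 x) (K2 x))"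
    using fY by (intro sum.cong refl arg_cong2[where f="(*)"] vdist_finite[symmetric]) (auto simp: Y_def A_def)
  also have "\<dots> \<le> (\<Sum>x\<in>A. pmf p x * B)"
    by (intro sum_mono mult_left_mono B) (auto simp: A_def)
  also have "\<dots> = B" using fA by (simp add: sum_distrib_right[symmetric] sum_pmf_eq_1 A_def)
  finally show ?thesis .
qed

lemma vdist_map:
  assumes "finite (set_pmf p)" "finite (set_pmf q)"
  shows "vdist (map_pmf f p) (map_pmf f q) \<le> vdist p q"
  unfolding map_pmf_def using assms by (intro vdist_bind_left) auto

lemma set_seq_pmf: "set_pmf (seq_pmf ps) = {xs. list_all2 (\<lambda>x p. x \<in> set_pmf p) xs ps}"
proof (induction ps)
  case Nil then show ?case by auto
next
  case (Cons p ps)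
  show ?case
    by (auto simp: Cons list_all2_Cons2)
qed

lemma seq_pmf_length: "xs \<in> set_pmf (seq_pmf ps) \<Longrightarrow> length xs = length ps"
  by (auto simp: set_seq_pmf list_all2_lengthD)

lemma seq_pmf_nth: "xs \<in> set_pmf (seq_pmf ps) \<Longrightarrow> i < length ps \<Longrightarrow> xs ! i \<in> set_pmf (ps ! i)"
  by (auto simp: set_seq_pmf list_all2_conv_all_nth)

lemma finite_seq_pmf: "(\<And>p. p \<in> set ps \<Longrightarrow> finite (set_pmf p)) \<Longrightarrow> finite (set_pmf (seq_pmf ps))"
proof (induction ps)
  case Nil then show ?case by simp
next
  case (Cons p ps)
  then show ?case by auto
qed

lemma seq_pmf_map_map:
  "seq_pmf (map (\<lambda>l. map_pmf (f l) (p l)) ls) = map_pmf (\<lambda>xs. map2 f ls xs) (seq_pmf (map p ls))"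
  by (induction ls) (simp_all add: map_bind_pmf bind_map_pmf map_pmf_comp)

lemma seq_pmf_bind_indep:
  "seq_pmf (map (\<lambda>l. bind_pmf (p l) (\<lambda>u. map_pmf (g l u) (q l))) ls) =
   bind_pmf (seq_pmf (map p ls)) (\<lambda>us. map_pmf (\<lambda>vs. map (\<lambda>(l,u,v). g l u v) (zip ls (zip us vs))) (seq_pmf (map q ls)))"
proof (induction ls)
  case Nil then show ?case by (simp add: bind_return_pmf)
next
  case (Cons l ls)
  show ?case
    apply (simp add: Cons bind_assoc_pmf bind_map_pmf map_bind_pmf map_pmf_comp bind_return_pmf)
    apply (rule bind_pmf_cong[OF refl])
    apply (subst bind_commute_pmf)
    apply (simp add: map_pmf_def bind_assoc_pmf bind_return_pmf)
    done
qed

lemma append_eta: "(@) [] = (\<lambda>ys. ys)" "(@) (x # xs) = (\<lambda>ys. x # (xs @ ys))"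
  by auto

lemma list_update_eta: "list_update (x # xs) 0 = (\<lambda>y. y # xs)"
    "list_update (x # xs) (Suc j) = (\<lambda>y. x # xs[j := y])"
  by auto

lemma seq_pmf_append:
  "seq_pmf (ps @ qs) = bind_pmf (seq_pmf ps) (\<lambda>xs. map_pmf (\<lambda>ys. xs @ ys) (seq_pmf qs))"
  by (induction ps) (simp_all add: bind_return_pmf bind_assoc_pmf map_bind_pmf bind_map_pmf map_pmf_comp append_eta)

lemma seq_pmf_proj:
  "l < length ps \<Longrightarrow> map_pmf (\<lambda>xs. xs ! l) (seq_pmf ps) = ps ! l"
proof (induction ps arbitrary: l)
  case Nil then show ?case by simp
next
  case (Cons p ps)
  show ?case
  proof (cases l)
    case 0
    then show ?thesis by (simp add: map_bind_pmf map_pmf_comp bind_return_pmf' flip: map_pmf_def)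
  next
    case (Suc l')
    then show ?thesis using Cons by (simp add: map_bind_pmf map_pmf_comp)
  qed
qed

lemma seq_pmf_resample:
  "j < length ps \<Longrightarrow> bind_pmf (seq_pmf ps) (\<lambda>xs. map_pmf (\<lambda>x. xs[j := x]) (ps ! j)) = seq_pmf ps"
proof (induction ps arbitrary: j)
  case Nil then show ?case by simp
next
  case (Cons p ps)
  show ?case
  proof (cases j)
    case 0
    have "bind_pmf (seq_pmf (p # ps)) (\<lambda>xs. map_pmf (\<lambda>x. xs[j := x]) ((p # ps) ! j))
        = bind_pmf p (\<lambda>y. bind_pmf (seq_pmf ps) (\<lambda>xs. map_pmf (\<lambda>x. x # xs) p))"
      using 0 by (simp add: bind_assoc_pmf bind_map_pmf list_update_eta)
    also have "\<dots> = bind_pmf (seq_pmf ps) (\<lambda>xs. map_pmf (\<lambda>x. x # xs) p)" by simp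
    also have "\<dots> = seq_pmf (p # ps)"
      by (simp add: map_pmf_def) (subst bind_commute_pmf, rule refl)
    finally show ?thesis .
  next
    case (Suc j')
    have "bind_pmf (seq_pmf (p # ps)) (\<lambda>xs. map_pmf (\<lambda>x. xs[j := x]) ((p # ps) ! j))
       = bind_pmf p (\<lambda>y. map_pmf (\<lambda>xs. y # xs) (bind_pmf (seq_pmf ps) (\<lambda>xs. map_pmf (\<lambda>x. xs[j' := x]) (ps ! j'))))"
      using Suc by (simp add: bind_assoc_pmf bind_map_pmf map_bind_pmf map_pmf_comp list_update_eta)
    also have "\<dots> = seq_pmf (p # ps)" using Cons Suc by simp
    finally show ?thesis .
  qed
qed

lemma iid_Suc: "iid p (Suc n) = bind_pmf p (\<lambda>x. map_pmf (\<lambda>xs. x # xs) (iid p n))"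
  by (simp add: iid_def)

lemma iid_0: "iid p 0 = return_pmf []"
  by (simp add: iid_def)

lemma iid_map: "iid (map_pmf f p) n = map_pmf (map f) (iid p n)"
  by (induction n) (simp_all add: iid_0 iid_Suc map_bind_pmf bind_map_pmf map_pmf_comp)

lemma finite_iid: "finite (set_pmf p) \<Longrightarrow> finite (set_pmf (iid p n))"
  unfolding iid_def by (rule finite_seq_pmf) auto

lemma set_iid_length: "ws \<in> set_pmf (iid p n) \<Longrightarrow> length ws = n"
  unfolding iid_def by (drule seq_pmf_length) simp

lemma set_iid_elem: "ws \<in> set_pmf (iid p n) \<Longrightarrow> w \<in> set ws \<Longrightarrow> w \<in> set_pmf p"
  unfolding iid_def by (auto simp: set_seq_pmf list_all2_conv_all_nth in_set_conv_nth)

lemma pmf_bind_Cons: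
  "pmf (bind_pmf p (\<lambda>x. map_pmf (\<lambda>xs. x # xs) M)) ys =
     (case ys of [] \<Rightarrow> 0 | v # vs \<Rightarrow> pmf p v * pmf M vs)"
proof -
  have "pmf (bind_pmf p (\<lambda>x. map_pmf (\<lambda>xs. x # xs) M)) ys =
        measure_pmf.expectation p (\<lambda>x. pmf (map_pmf (\<lambda>xs. x # xs) M) ys)"
    by (simp add: pmf_bind)
  also have "\<dots> = (case ys of [] \<Rightarrow> 0 | v # vs \<Rightarrow> pmf p v * pmf M vs)"
  proof (cases ys)
    case Nil
    have "(\<lambda>x. pmf (map_pmf (\<lambda>xs. x # xs) M) ys) = (\<lambda>x. 0)"
      using Nil by (auto simp: pmf_eq_0_set_pmf)
    then show ?thesis using Nil by simp
  next
    case (Cons v vs)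
    have "pmf (map_pmf (\<lambda>xs. x # xs) M) ys = indicator {v} x * pmf M vs" for x
    proof (cases "x = v")
      case True
      then show ?thesis using Cons by (simp add: pmf_map_inj' inj_on_def)
    next
      case False
      then show ?thesis using Cons by (auto simp: pmf_eq_0_set_pmf)
    qed
    then show ?thesis using Cons
      by (simp add: measure_pmf_single)
  qed
  finally show ?thesis .
qed

lemma pmf_iid: "pmf (iid p n) ws = (if length ws = n then prod_list (map (pmf p) ws) else 0)"
proof (induction n arbitrary: ws)
  case 0 then show ?case by (auto simp: iid_0 pmf_return)
next
  case (Suc n)
  then show ?case by (cases ws) (simp_all add: iid_Suc pmf_bind_Cons)
qed

lemma vdist_seq:
  assumes "length ps = length qs"
    and "\<And>p. p \<in> set ps \<union> set qs \<Longrightarrow> finite (set_pmf p)"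
  shows "vdist (seq_pmf ps) (seq_pmf qs) \<le> (\<Sum>i<length ps. vdist (ps ! i) (qs ! i))"
  using assms
proof (induction ps arbitrary: qs)
  case Nil then show ?case by simp
next
  case (Cons p ps)
  then obtain q qs' where qs: "qs = q # qs'" by (cases qs) auto
  have fin: "finite (set_pmf p)" "finite (set_pmf q)" "finite (set_pmf (seq_pmf ps))" "finite (set_pmf (seq_pmf qs'))"
    using Cons.prems qs by (auto intro!: finite_seq_pmf)
  let ?K = "\<lambda>x. map_pmf (\<lambda>xs. x # xs) (seq_pmf qs')"
  have e1: "seq_pmf (p # ps) = bind_pmf p (\<lambda>x. map_pmf (\<lambda>xs. x # xs) (seq_pmf ps))" by simp
  have e2: "seq_pmf qs = bind_pmf q ?K" using qs by simp
  have "vdist (seq_pmf (p # ps)) (seq_pmf qs) \<le> vdist (seq_pmf (p # ps)) (bind_pmf p ?K) + vdist (bind_pmf p ?K) (seq_pmf qs)"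
    using fin qs by (intro vdist_triangle) (auto intro!: finite_seq_pmf Cons.prems)
  also have "\<dots> = vdist (bind_pmf p (\<lambda>x. map_pmf (\<lambda>xs. x # xs) (seq_pmf ps))) (bind_pmf p ?K) + vdist (bind_pmf p ?K) (bind_pmf q ?K)"
    by (simp only: e1 e2)
  also have "vdist (bind_pmf p ?K) (bind_pmf q ?K) \<le> vdist p q"
    using fin by (intro vdist_bind_left) auto
  also have "vdist (bind_pmf p (\<lambda>x. map_pmf (\<lambda>xs. x # xs) (seq_pmf ps))) (bind_pmf p ?K) \<le> vdist (seq_pmf ps) (seq_pmf qs')"
    using fin by (intro vdist_bind_right vdist_map) auto
  also have "vdist (seq_pmf ps) (seq_pmf qs') \<le> (\<Sum>i<length ps. vdist (ps ! i) (qs' ! i))"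
    using Cons qs by auto
  also have "(\<Sum>i<length ps. vdist (ps ! i) (qs' ! i)) + vdist p q = (\<Sum>i<length (p # ps). vdist ((p # ps) ! i) (qs ! i))"
    unfolding qs by (simp only: length_Cons sum.lessThan_Suc_shift nth_Cons_0 nth_Cons_Suc add.commute)
  finally show ?case by simp
qed

definition cols :: "nat \<Rightarrow> (bool list \<times> 'z) list \<Rightarrow> bool list list" where
  "cols n D = map (\<lambda>l. map (\<lambda>w. fst w ! l) D) [0..<n]"

lemma map_nth_map2_Cons:
  "length xs = length Ys \<Longrightarrow> map (\<lambda>x. x ! 0) (map2 (#) xs Ys) = xs"
  "length xs = length Ys \<Longrightarrow> map (\<lambda>x. x ! Suc j) (map2 (#) xs Ys) = map (\<lambda>x. x ! j) Ys"
  by (induction xs arbitrary: Ys; case_tac Ys; auto)+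

lemma chanN_Suc:
  assumes "length xs = length Ys"
  shows "chanN W (Suc N) (map2 (#) xs Ys) = bind_pmf (W xs) (\<lambda>z. map_pmf (\<lambda>Z. z # Z) (chanN W N Ys))"
proof -
  have u: "[0..<Suc N] = 0 # map Suc [0..<N]" by (simp add: upt_conv_Cons map_Suc_upt)
  have e: "chanN W (Suc N) X = bind_pmf (W (map (\<lambda>x. x!0) X)) (\<lambda>z. map_pmf (\<lambda>Z. z#Z) (seq_pmf (map (\<lambda>j. W (map (\<lambda>x. x ! Suc j) X)) [0..<N])))" for X
     unfolding chanN_def by (simp only: u list.map seq_pmf.simps map_map comp_def)
  have h1: "map (\<lambda>x. x!0) (map2 (#) xs Ys) = xs" and h2: "\<And>j. map (\<lambda>x. x ! Suc j) (map2 (#) xs Ys) = map (\<lambda>x. x ! j) Ys"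
    using map_nth_map2_Cons[OF assms] by auto
  show ?thesis by (subst e) (simp only: h1 h2 chanN_def)
qed

lemma chanN_0: "chanN W 0 X = return_pmf []"
  by (simp add: chanN_def)

lemma cols_Cons:
  assumes "length (fst w) = n"
  shows "cols n (w # D) = map2 (#) (fst w) (cols n D)"
  using assms by (intro nth_equalityI) (auto simp: cols_def)

lemma cols_Nil: "cols n [] = replicate n []"
  by (simp add: cols_def map_replicate_const)

lemma seq_iid_Suc:
  "seq_pmf (map (\<lambda>p. iid p (Suc N)) ps) =
   bind_pmf (seq_pmf ps) (\<lambda>xs. map_pmf (\<lambda>vs. map (\<lambda>(l,u,v). u # v) (zip ps (zip xs vs))) (seq_pmf (map (\<lambda>p. iid p N) ps)))"
  using seq_pmf_bind_indep[of "\<lambda>p. p" "\<lambda>l u v. u # v" "\<lambda>p. iid p N" ps] by (simp add: iid_Suc)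

lemma zip_map2_Cons:
  "length xs = length ps \<Longrightarrow> length vs = length ps \<Longrightarrow> map (\<lambda>(l,u,v). u # v) (zip ps (zip xs vs)) = map2 (#) xs vs"
  by (induction ps arbitrary: xs vs) (auto simp: length_Suc_conv)

lemma transp:
  fixes ps :: "bool pmf list" and W :: "bool list \<Rightarrow> 'z pmf"
  defines "Q \<equiv> bind_pmf (seq_pmf ps) (\<lambda>xs. map_pmf (\<lambda>z. (xs, z)) (W xs))"
  shows "bind_pmf (seq_pmf (map (\<lambda>p. iid p N) ps)) (\<lambda>X. map_pmf (\<lambda>Z. (X, Z)) (chanN W N X))
         = map_pmf (\<lambda>D. (cols (length ps) D, map snd D)) (iid Q N)"
proof (induction N)
  case 0
  have "seq_pmf (map (\<lambda>p. iid p 0) ps) = return_pmf (replicate (length ps) [])"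
    by (induction ps) (simp_all add: iid_0 bind_return_pmf)
  then show ?case by (simp add: iid_0 chanN_0 bind_return_pmf cols_Nil)
next
  case (Suc N)
  let ?XI = "seq_pmf (map (\<lambda>p. iid p N) ps)"
  let ?T = "\<lambda>xs vs. map (\<lambda>(l,u,v). u # v) (zip ps (zip xs vs))"
  have "bind_pmf (seq_pmf (map (\<lambda>p. iid p (Suc N)) ps)) (\<lambda>X. map_pmf (\<lambda>Z. (X, Z)) (chanN W (Suc N) X))
      = bind_pmf (seq_pmf ps) (\<lambda>xs. bind_pmf ?XI (\<lambda>Ys. map_pmf (\<lambda>Z. (?T xs Ys, Z)) (chanN W (Suc N) (?T xs Ys))))"
    by (simp add: seq_iid_Suc bind_assoc_pmf bind_map_pmf)
  also have "\<dots> = bind_pmf (seq_pmf ps) (\<lambda>xs. bind_pmf ?XI (\<lambda>Ys. bind_pmf (W xs) (\<lambda>z. map_pmf (\<lambda>Z. (map2 (#) xs Ys, z # Z)) (chanN W N Ys))))"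
  proof (intro bind_pmf_cong refl)
    fix xs Ys assume xs: "xs \<in> set_pmf (seq_pmf ps)" and Ys: "Ys \<in> set_pmf ?XI"
    have l: "length xs = length ps" "length Ys = length ps"
      using seq_pmf_length[OF xs] seq_pmf_length[OF Ys] by auto
    show "map_pmf (\<lambda>Z. (?T xs Ys, Z)) (chanN W (Suc N) (?T xs Ys)) =
          bind_pmf (W xs) (\<lambda>z. map_pmf (\<lambda>Z. (map2 (#) xs Ys, z # Z)) (chanN W N Ys))"
      using l by (simp add: zip_map2_Cons chanN_Suc map_bind_pmf map_pmf_comp)
  qed
  also have "\<dots> = bind_pmf (seq_pmf ps) (\<lambda>xs. bind_pmf (W xs) (\<lambda>z. bind_pmf ?XI (\<lambda>Ys. map_pmf (\<lambda>Z. (map2 (#) xs Ys, z # Z)) (chanN W N Ys))))"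
    by (intro bind_pmf_cong refl) (rule bind_commute_pmf)
  also have "\<dots> = bind_pmf Q (\<lambda>w. map_pmf (\<lambda>(Ys, Z). (map2 (#) (fst w) Ys, snd w # Z))
                    (bind_pmf ?XI (\<lambda>X. map_pmf (\<lambda>Z. (X, Z)) (chanN W N X))))"
    by (simp add: Q_def bind_assoc_pmf bind_map_pmf map_bind_pmf map_pmf_comp)
  also have "\<dots> = bind_pmf Q (\<lambda>w. map_pmf (\<lambda>D. (map2 (#) (fst w) (cols (length ps) D), snd w # map snd D)) (iid Q N))"
    by (simp add: Suc map_pmf_comp)
  also have "\<dots> = bind_pmf Q (\<lambda>w. map_pmf (\<lambda>D. (cols (length ps) (w # D), map snd (w # D))) (iid Q N))"
  proof (intro bind_pmf_cong refl map_pmf_cong)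
    fix w D assume w: "w \<in> set_pmf Q"
    then have "length (fst w) = length ps" by (auto simp: Q_def dest: seq_pmf_length)
    then show "(map2 (#) (fst w) (cols (length ps) D), snd w # map snd D) = (cols (length ps) (w # D), map snd (w # D))"
      by (simp add: cols_Cons)
  qed
  also have "\<dots> = map_pmf (\<lambda>D. (cols (length ps) D, map snd D)) (iid Q (Suc N))"
    by (simp add: iid_Suc map_bind_pmf map_pmf_comp)
  finally show ?case .
qed

lemma collision_sum:
  fixes g :: "'i \<Rightarrow> real" and xv :: "'i \<Rightarrow> bool list"
  assumes fI: "finite I" and tu: "two_universal n r H"
    and len: "\<And>i. i \<in> I \<Longrightarrow> length (xv i) = n" and inj: "inj_on xv I"
    and g: "\<And>i. i \<in> I \<Longrightarrow> g i \<ge> 0"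
  defines "Sr \<equiv> {s::bool list. length s = r}"
  shows "(\<Sum>h\<in>H. \<Sum>s\<in>Sr. ((\<Sum>i\<in>I. if h (xv i) = s then g i else 0) - (\<Sum>i\<in>I. g i) / 2 ^ r)\<^sup>2)
          \<le> real (card H) * (\<Sum>i\<in>I. (g i)\<^sup>2)"
proof -
  have fH: "finite H" and hl: "\<And>h x. h \<in> H \<Longrightarrow> length x = n \<Longrightarrow> length (h x) = r"
    and coll: "\<And>x y. length x = n \<Longrightarrow> length y = n \<Longrightarrow> x \<noteq> y \<Longrightarrow> real (card {h\<in>H. h x = h y}) \<le> real (card H) / 2 ^ r"
    using tu by (auto simp: two_universal_def)
  have fS: "finite Sr" unfolding Sr_def using finite_lists_length_eq[of "UNIV :: bool set" r] by simp
  have cS: "real (card Sr) = 2 ^ r"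
    using card_lists_length_eq[of "UNIV :: bool set" r] by (simp add: Sr_def)
  define G where "G = (\<Sum>i\<in>I. g i)"
  define Q where "Q (h::bool list \<Rightarrow> bool list) (s::bool list) = (\<Sum>i\<in>I. if h (xv i) = s then g i else 0)" for h s
  have sumQ: "(\<Sum>s\<in>Sr. Q h s) = G" if "h \<in> H" for h
  proof -
    have "(\<Sum>s\<in>Sr. Q h s) = (\<Sum>i\<in>I. \<Sum>s\<in>Sr. if h (xv i) = s then g i else 0)"
      unfolding Q_def by (rule sum.swap)
    also have "\<dots> = (\<Sum>i\<in>I. g i)"
    proof (intro sum.cong refl)
      fix i assume "i \<in> I"
      then have "h (xv i) \<in> Sr" using hl[OF that len] by (auto simp: Sr_def)
      then show "(\<Sum>s\<in>Sr. if h (xv i) = s then g i else 0) = g i"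
        using fS by (simp add: sum.delta)
    qed
    finally show ?thesis by (simp add: G_def)
  qed
  have sumQ2: "(\<Sum>s\<in>Sr. (Q h s)\<^sup>2) = (\<Sum>i\<in>I. \<Sum>j\<in>I. if h (xv i) = h (xv j) then g i * g j else 0)" if "h \<in> H" for h
  proof -
    have "(\<Sum>s\<in>Sr. (Q h s)\<^sup>2) = (\<Sum>s\<in>Sr. \<Sum>i\<in>I. \<Sum>j\<in>I. (if h (xv i) = s then g i else 0) * (if h (xv j) = s then g j else 0))"
      unfolding Q_def power2_eq_square by (simp add: sum_product)
    also have "\<dots> = (\<Sum>i\<in>I. \<Sum>j\<in>I. \<Sum>s\<in>Sr. (if h (xv i) = s then g i else 0) * (if h (xv j) = s then g j else 0))"
      by (simp add: sum.swap[of _ Sr] sum.swap[of _ Sr I])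
    also have "\<dots> = (\<Sum>i\<in>I. \<Sum>j\<in>I. if h (xv i) = h (xv j) then g i * g j else 0)"
    proof (intro sum.cong refl)
      fix i j assume "i \<in> I" "j \<in> I"
      then have "h (xv i) \<in> Sr" using hl[OF that len] by (auto simp: Sr_def)
      have "(\<Sum>s\<in>Sr. (if h (xv i) = s then g i else 0) * (if h (xv j) = s then g j else 0))
          = (\<Sum>s\<in>Sr. if h (xv i) = s then (g i * (if h (xv i) = h (xv j) then g j else 0)) else 0)"
        by (intro sum.cong refl) auto
      also have "\<dots> = (if h (xv i) = h (xv j) then g i * g j else 0)"
        using fS \<open>h (xv i) \<in> Sr\<close> by (simp add: sum.delta)
      finally show "(\<Sum>s\<in>Sr. (if h (xv i) = s then g i else 0) * (if h (xv j) = s then g j else 0))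
          = (if h (xv i) = h (xv j) then g i * g j else 0)" .
    qed
    finally show ?thesis .
  qed
  have "(\<Sum>h\<in>H. \<Sum>s\<in>Sr. (Q h s - G / 2 ^ r)\<^sup>2) = (\<Sum>h\<in>H. (\<Sum>s\<in>Sr. (Q h s)\<^sup>2) - G\<^sup>2 / 2 ^ r)"
  proof (intro sum.cong refl)
    fix h assume h: "h \<in> H"
    have "(\<Sum>s\<in>Sr. (Q h s - G / 2 ^ r)\<^sup>2) = (\<Sum>s\<in>Sr. (Q h s)\<^sup>2) - 2 * (G / 2 ^ r) * (\<Sum>s\<in>Sr. Q h s) + real (card Sr) * (G / 2 ^ r)\<^sup>2"
      by (simp add: power2_diff sum.distrib sum_subtractf sum_distrib_left sum_divide_distrib algebra_simps)
    also have "\<dots> = (\<Sum>s\<in>Sr. (Q h s)\<^sup>2) - G\<^sup>2 / 2 ^ r"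
      by (simp add: sumQ[OF h] cS power2_eq_square field_simps)
    finally show "(\<Sum>s\<in>Sr. (Q h s - G / 2 ^ r)\<^sup>2) = (\<Sum>s\<in>Sr. (Q h s)\<^sup>2) - G\<^sup>2 / 2 ^ r" .
  qed
  also have "\<dots> = (\<Sum>i\<in>I. \<Sum>j\<in>I. g i * g j * real (card {h\<in>H. h (xv i) = h (xv j)})) - real (card H) * G\<^sup>2 / 2 ^ r"
  proof -
    have "(\<Sum>h\<in>H. \<Sum>s\<in>Sr. (Q h s)\<^sup>2) = (\<Sum>i\<in>I. \<Sum>j\<in>I. \<Sum>h\<in>H. if h (xv i) = h (xv j) then g i * g j else 0)"
      by (simp add: sumQ2 sum.swap[of _ H])
    also have "\<dots> = (\<Sum>i\<in>I. \<Sum>j\<in>I. g i * g j * real (card {h\<in>H. h (xv i) = h (xv j)}))"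
      using fH by (simp add: sum.If_cases Int_def mult.commute)
    finally show ?thesis by (simp add: sum_subtractf)
  qed
  also have "\<dots> \<le> (\<Sum>i\<in>I. \<Sum>j\<in>I. g i * g j * (real (card H) / 2 ^ r + (if i = j then real (card H) else 0))) - real (card H) * G\<^sup>2 / 2 ^ r"
  proof -
    have "g i * g j * real (card {h\<in>H. h (xv i) = h (xv j)}) \<le> g i * g j * (real (card H) / 2 ^ r + (if i = j then real (card H) else 0))"
      if "i \<in> I" "j \<in> I" for i j
    proof (intro mult_left_mono)
      show "0 \<le> g i * g j" using g that by simp
      show "real (card {h\<in>H. h (xv i) = h (xv j)}) \<le> real (card H) / 2 ^ r + (if i = j then real (card H) else 0)"
      proof (cases "i = j")
        case True
        have "card {h\<in>H. h (xv i) = h (xv j)} \<le> card H" using fH by (intro card_mono) auto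
        then show ?thesis using True by simp
      next
        case False
        then have "xv i \<noteq> xv j" using inj that by (auto simp: inj_on_def)
        then show ?thesis using coll[OF len len] that False by auto
      qed
    qed
    then show ?thesis by (intro diff_right_mono sum_mono) auto
  qed
  also have "\<dots> = real (card H) * (\<Sum>i\<in>I. (g i)\<^sup>2)"
  proof -
    have "(\<Sum>i\<in>I. \<Sum>j\<in>I. g i * g j * (real (card H) / 2 ^ r + (if i = j then real (card H) else 0)))
        = (\<Sum>i\<in>I. \<Sum>j\<in>I. g i * g j * (real (card H) / 2 ^ r)) + (\<Sum>i\<in>I. \<Sum>j\<in>I. if i = j then g i * g j * real (card H) else 0)"
      by (simp only: sum.distrib[symmetric]) (intro sum.cong refl, auto simp: algebra_simps)
    also have "(\<Sum>i\<in>I. \<Sum>j\<in>I. if i = j then g i * g j * real (card H) else 0) = real (card H) * (\<Sum>i\<in>I. (g i)\<^sup>2)"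
      using fI by (simp add: sum.delta sum_distrib_left power2_eq_square mult_ac)
    also have "(\<Sum>i\<in>I. \<Sum>j\<in>I. g i * g j * (real (card H) / 2 ^ r)) = real (card H) * G\<^sup>2 / 2 ^ r"
      by (simp add: G_def power2_eq_square sum_distrib_left sum_distrib_right sum_divide_distrib mult_ac)
    finally show ?thesis by simp
  qed
  finally show ?thesis by (simp add: Q_def G_def)
qed

lemma sumQ_gen:
  assumes fI: "finite I" and "\<And>i. i \<in> I \<Longrightarrow> length (h (xv i)) = r"
  shows "(\<Sum>s\<in>{s::bool list. length s = r}. \<Sum>i\<in>I. if h (xv i) = s then c i else 0) = (\<Sum>i\<in>I. c i)"
proof -
  have fS: "finite {s::bool list. length s = r}" using finite_lists_length_eq[of "UNIV :: bool set" r] by simp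
  have "(\<Sum>s\<in>{s::bool list. length s = r}. \<Sum>i\<in>I. if h (xv i) = s then c i else 0)
       = (\<Sum>i\<in>I. \<Sum>s\<in>{s::bool list. length s = r}. if h (xv i) = s then c i else 0)"
    by (rule sum.swap)
  also have "\<dots> = (\<Sum>i\<in>I. c i)"
    using assms fS by (intro sum.cong refl) (simp add: sum.delta)
  finally show ?thesis .
qed

lemma card_bits: "real (card {s::bool list. length s = r}) = 2 ^ r"
  using card_lists_length_eq[of "UNIV :: bool set" r] by simp

lemma finite_bits: "finite {s::bool list. length s = r}"
  using finite_lists_length_eq[of "UNIV :: bool set" r] by simp

lemma lhl_y:
  fixes f :: "'i \<Rightarrow> real" and xv :: "'i \<Rightarrow> bool list"
  assumes fI: "finite I" and tu: "two_universal n r H"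
    and len: "\<And>i. i \<in> I \<Longrightarrow> length (xv i) = n" and inj: "inj_on xv I"
    and f: "\<And>i. i \<in> I \<Longrightarrow> f i \<ge> 0" and th: "\<theta> \<ge> 0"
    and good: "\<And>i. i \<in> I \<Longrightarrow> i \<notin> S \<Longrightarrow> f i \<le> \<theta> * (\<Sum>j\<in>I. f j)"
  shows "(\<Sum>h\<in>H. \<Sum>s\<in>{s::bool list. length s = r}. \<bar>(\<Sum>i\<in>I. if h (xv i) = s then f i else 0) - (\<Sum>i\<in>I. f i) / 2 ^ r\<bar>)
          \<le> real (card H) * (2 * (\<Sum>i\<in>I \<inter> S. f i) + sqrt (2 ^ r * \<theta>) * (\<Sum>i\<in>I. f i))"
proof -
  define Sr where "Sr = {s::bool list. length s = r}"
  have fS: "finite Sr" unfolding Sr_def by (rule finite_bits)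
  have fH: "finite H" and hl: "\<And>h x. h \<in> H \<Longrightarrow> length x = n \<Longrightarrow> length (h x) = r"
    using tu by (auto simp: two_universal_def)
  define g where "g i = (if i \<in> S then 0 else f i)" for i
  define b where "b i = (if i \<in> S then f i else 0)" for i
  define F where "F = (\<Sum>i\<in>I. f i)"
  define G where "G = (\<Sum>i\<in>I. g i)"
  define B where "B = (\<Sum>i\<in>I. b i)"
  have FGB: "F = G + B" unfolding F_def G_def B_def by (simp add: sum.distrib[symmetric] g_def b_def) (intro sum.cong refl, auto)
  have g0: "g i \<ge> 0" "b i \<ge> 0" if "i \<in> I" for i using f that by (auto simp: g_def b_def)
  have G0: "G \<ge> 0" "B \<ge> 0" unfolding G_def B_def using g0 by (auto intro: sum_nonneg)
  have B_eq: "B = (\<Sum>i\<in>I \<inter> S. f i)"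
    unfolding B_def b_def using fI by (simp add: sum.If_cases)
  define D where "D (h::bool list \<Rightarrow> bool list) (s::bool list) = (\<Sum>i\<in>I. if h (xv i) = s then g i else 0) - G / 2 ^ r" for h s
  have pt: "\<bar>(\<Sum>i\<in>I. if h (xv i) = s then f i else 0) - F / 2 ^ r\<bar>
          \<le> \<bar>D h s\<bar> + (\<Sum>i\<in>I. if h (xv i) = s then b i else 0) + B / 2 ^ r" for h s
  proof -
    have eq: "(\<Sum>i\<in>I. if h (xv i) = s then f i else 0) = (\<Sum>i\<in>I. if h (xv i) = s then g i else 0) + (\<Sum>i\<in>I. if h (xv i) = s then b i else 0)"
      by (simp add: sum.distrib[symmetric]) (intro sum.cong refl, auto simp: g_def b_def)
    have n1: "(\<Sum>i\<in>I. if h (xv i) = s then b i else 0) \<ge> 0" using g0 by (intro sum_nonneg) auto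
    have n2: "B / 2 ^ r \<ge> 0" using G0 by simp
    have key: "\<And>a b c d::real. b \<ge> 0 \<Longrightarrow> d \<ge> 0 \<Longrightarrow> \<bar>a + b - (c + d)\<bar> \<le> \<bar>a - c\<bar> + b + d"
      by linarith
    show ?thesis unfolding D_def FGB add_divide_distrib eq by (rule key[OF n1 n2])
  qed
  have "(\<Sum>h\<in>H. \<Sum>s\<in>Sr. \<bar>(\<Sum>i\<in>I. if h (xv i) = s then f i else 0) - F / 2 ^ r\<bar>)
      \<le> (\<Sum>h\<in>H. \<Sum>s\<in>Sr. \<bar>D h s\<bar> + (\<Sum>i\<in>I. if h (xv i) = s then b i else 0) + B / 2 ^ r)"
    by (intro sum_mono pt)
  also have "\<dots> = (\<Sum>h\<in>H. \<Sum>s\<in>Sr. \<bar>D h s\<bar>) + (\<Sum>h\<in>H. \<Sum>s\<in>Sr. \<Sum>i\<in>I. if h (xv i) = s then b i else 0) + (\<Sum>h\<in>H. \<Sum>s\<in>Sr. B / 2 ^ r)"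
    by (simp add: sum.distrib)
  also have "(\<Sum>h\<in>H. \<Sum>s\<in>Sr. \<Sum>i\<in>I. if h (xv i) = s then b i else 0) = real (card H) * B"
  proof -
    have "(\<Sum>h\<in>H. \<Sum>s\<in>Sr. \<Sum>i\<in>I. if h (xv i) = s then b i else 0) = (\<Sum>h\<in>H. B)"
      unfolding Sr_def B_def using fI hl len by (intro sum.cong refl sumQ_gen) auto
    then show ?thesis by simp
  qed
  also have "(\<Sum>h\<in>H. \<Sum>s\<in>Sr. B / 2 ^ r) = real (card H) * B"
    using card_bits[of r] by (simp add: Sr_def)
  also have "(\<Sum>h\<in>H. \<Sum>s\<in>Sr. \<bar>D h s\<bar>) \<le> real (card H) * sqrt (2 ^ r * \<theta>) * F"
  proof -
    have cs: "(\<Sum>p\<in>H \<times> Sr. \<bar>D (fst p) (snd p)\<bar>)\<^sup>2 \<le> (\<Sum>p\<in>H \<times> Sr. (\<bar>D (fst p) (snd p)\<bar>)\<^sup>2) * real (card (H \<times> Sr))"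
      by (rule sum_squared_le_sum_of_squares)
    have e1: "(\<Sum>p\<in>H \<times> Sr. \<bar>D (fst p) (snd p)\<bar>) = (\<Sum>h\<in>H. \<Sum>s\<in>Sr. \<bar>D h s\<bar>)"
      by (simp add: sum.cartesian_product case_prod_beta)
    have e2: "(\<Sum>p\<in>H \<times> Sr. (\<bar>D (fst p) (snd p)\<bar>)\<^sup>2) = (\<Sum>h\<in>H. \<Sum>s\<in>Sr. (D h s)\<^sup>2)"
      by (simp add: sum.cartesian_product case_prod_beta)
    have col: "(\<Sum>h\<in>H. \<Sum>s\<in>Sr. (D h s)\<^sup>2) \<le> real (card H) * (\<Sum>i\<in>I. (g i)\<^sup>2)"
      unfolding D_def Sr_def G_def using collision_sum[OF fI tu len inj, of g] g0 by auto
    have gg: "(\<Sum>i\<in>I. (g i)\<^sup>2) \<le> \<theta> * F * F"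
    proof -
      have "(\<Sum>i\<in>I. (g i)\<^sup>2) \<le> (\<Sum>i\<in>I. g i * (\<theta> * F))"
      proof (intro sum_mono)
        fix i assume i: "i \<in> I"
        have "g i \<le> \<theta> * F" using good[OF i] g0[OF i] th f[OF i] unfolding g_def F_def
          by (auto intro: mult_nonneg_nonneg sum_nonneg f)
        then show "(g i)\<^sup>2 \<le> g i * (\<theta> * F)" using g0[OF i] by (simp add: power2_eq_square mult_left_mono)
      qed
      also have "\<dots> = G * (\<theta> * F)" by (simp add: G_def sum_distrib_right)
      also have "\<dots> \<le> F * (\<theta> * F)" using FGB G0 th
        by (intro mult_right_mono) (auto simp: F_def intro!: mult_nonneg_nonneg sum_nonneg f)
      finally show ?thesis by (simp add: mult_ac)
    qed
    have cardHS: "real (card (H \<times> Sr)) = real (card H) * 2 ^ r"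
      using card_bits[of r] by (simp add: Sr_def card_cartesian_product)
    have "(\<Sum>h\<in>H. \<Sum>s\<in>Sr. \<bar>D h s\<bar>)\<^sup>2 \<le> real (card H) * (\<theta> * F * F) * (real (card H) * 2 ^ r)"
    proof -
      have "(\<Sum>h\<in>H. \<Sum>s\<in>Sr. \<bar>D h s\<bar>)\<^sup>2 \<le> (\<Sum>h\<in>H. \<Sum>s\<in>Sr. (D h s)\<^sup>2) * (real (card H) * 2 ^ r)"
        using cs e1 e2 cardHS by simp
      also have "\<dots> \<le> real (card H) * (\<theta> * F * F) * (real (card H) * 2 ^ r)"
        using col gg by (intro mult_right_mono) (auto intro: order.trans[OF _ mult_left_mono[of _ _ "real (card H)"]])
      finally show ?thesis .
    qed
    also have "\<dots> = (real (card H) * sqrt (2 ^ r * \<theta>) * F)\<^sup>2"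
      using th by (simp add: power2_eq_square real_sqrt_mult algebra_simps)
    finally have sq: "(\<Sum>h\<in>H. \<Sum>s\<in>Sr. \<bar>D h s\<bar>)\<^sup>2 \<le> (real (card H) * sqrt (2 ^ r * \<theta>) * F)\<^sup>2" .
    have F0: "F \<ge> 0" using FGB G0 by simp
    have "0 \<le> real (card H) * sqrt (2 ^ r * \<theta>) * F"
      using F0 th by (intro mult_nonneg_nonneg) simp_all
    then show ?thesis by (rule power2_le_imp_le[OF sq])
  qed
  ultimately show ?thesis
    unfolding B_eq[symmetric] F_def[symmetric] Sr_def[symmetric] by (simp add: algebra_simps)
qed

lemma unif_bits_nonempty: "{xs::bool list. length xs = r} \<noteq> {}"
  using length_replicate[of r False] by blast

lemma pmf_unif_bits: "pmf (unif_bits r) s = (if length s = r then 1 / 2 ^ r else 0)"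
  unfolding unif_bits_def using finite_bits[of r] unif_bits_nonempty[of r] card_bits[of r]
  by (simp add: indicator_def)

lemma set_unif_bits: "set_pmf (unif_bits r) = {xs. length xs = r}"
  unfolding unif_bits_def using finite_bits[of r] unif_bits_nonempty[of r] by simp

lemma finite_unif_bits: "finite (set_pmf (unif_bits r))"
  by (simp add: set_unif_bits finite_bits)

lemma pmf_map_hash:
  assumes "finite H" "H \<noteq> {}"
  shows "pmf (map_pmf (\<lambda>h. (h, h x, y')) (pmf_of_set H)) (h, s, y) = (if h \<in> H \<and> h x = s \<and> y' = y then 1 / card H else 0)"
proof (cases "h x = s \<and> y' = y")
  case True
  have inj: "inj (\<lambda>h. (h, h x, y'))" by (auto simp: inj_on_def)
  have "pmf (map_pmf (\<lambda>h. (h, h x, y')) (pmf_of_set H)) ((\<lambda>h. (h, h x, y')) h) = pmf (pmf_of_set H) h"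
    by (rule pmf_map_inj'[OF inj])
  then show ?thesis using True assms by (auto simp: indicator_def)
next
  case False
  then have "(h, s, y) \<notin> set_pmf (map_pmf (\<lambda>h. (h, h x, y')) (pmf_of_set H))" by auto
  then show ?thesis using False by (auto simp: pmf_eq_0_set_pmf)
qed

lemma pmf_ideal_inner:
  assumes "finite H" "H \<noteq> {}"
  shows "pmf (bind_pmf (pmf_of_set H) (\<lambda>h. map_pmf (\<lambda>u. (h, u, y')) (unif_bits r))) (h, s, y)
       = (if h \<in> H \<and> length s = r \<and> y' = y then 1 / (card H * 2 ^ r) else 0)"
proof -
  have inner: "pmf (map_pmf (\<lambda>u. (h', u, y')) (unif_bits r)) (h, s, y) = (if h' = h \<and> y' = y \<and> length s = r then 1 / 2 ^ r else 0)" for h'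
  proof (cases "h' = h \<and> y' = y")
    case True
    have inj: "inj (\<lambda>u. (h', u, y'))" by (auto simp: inj_on_def)
    have "pmf (map_pmf (\<lambda>u. (h', u, y')) (unif_bits r)) ((\<lambda>u. (h', u, y')) s) = pmf (unif_bits r) s"
      by (rule pmf_map_inj'[OF inj])
    then show ?thesis using True by (simp add: pmf_unif_bits)
  next
    case False
    then have "(h, s, y) \<notin> set_pmf (map_pmf (\<lambda>u. (h', u, y')) (unif_bits r))" by auto
    then show ?thesis using False by (auto simp: pmf_eq_0_set_pmf)
  qed
  have "pmf (bind_pmf (pmf_of_set H) (\<lambda>h. map_pmf (\<lambda>u. (h, u, y')) (unif_bits r))) (h, s, y)
      = (\<Sum>h'\<in>H. pmf (pmf_of_set H) h' * (if h' = h \<and> y' = y \<and> length s = r then 1 / 2 ^ r else 0))"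
    using assms by (subst pmf_bind_finite[of H]) (simp_all add: inner)
  also have "\<dots> = (\<Sum>h'\<in>H. if h' = h then (if y' = y \<and> length s = r then 1 / (card H * 2 ^ r) else 0) else 0)"
    using assms by (intro sum.cong refl) auto
  also have "\<dots> = (if h \<in> H \<and> length s = r \<and> y' = y then 1 / (card H * 2 ^ r) else 0)"
    using assms by (simp add: sum.delta)
  finally show ?thesis .
qed

lemma pmf_map_snd_sum:
  assumes "finite (set_pmf J)"
  shows "pmf (map_pmf snd J) y = (\<Sum>w\<in>{w\<in>set_pmf J. snd w = y}. pmf J w)"
proof -
  have "pmf (map_pmf snd J) y = measure J (snd -` {y})" by (rule pmf_map)
  also have "\<dots> = measure J (set_pmf J \<inter> snd -` {y})" using measure_Int_set_pmf[of J "snd -` {y}"] by (simp add: Int_commute)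
  also have "\<dots> = (\<Sum>w\<in>set_pmf J \<inter> snd -` {y}. pmf J w)"
    using assms by (intro measure_measure_pmf_finite) auto
  also have "set_pmf J \<inter> snd -` {y} = {w\<in>set_pmf J. snd w = y}" by auto
  finally show ?thesis .
qed

lemma lhl_pmf:
  fixes J :: "(bool list \<times> 'y) pmf" and H :: "(bool list \<Rightarrow> bool list) set"
  assumes finJ: "finite (set_pmf J)" and lenJ: "\<And>w. w \<in> set_pmf J \<Longrightarrow> length (fst w) = n"
    and tu: "two_universal n r H" and th: "\<theta> \<ge> 0"
    and good: "\<And>w. w \<in> set_pmf J \<Longrightarrow> w \<notin> S \<Longrightarrow> pmf J w \<le> \<theta> * pmf (map_pmf snd J) (snd w)"
  shows "vdist (bind_pmf J (\<lambda>w. map_pmf (\<lambda>h. (h, h (fst w), snd w)) (pmf_of_set H)))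
               (bind_pmf J (\<lambda>w. bind_pmf (pmf_of_set H) (\<lambda>h. map_pmf (\<lambda>u. (h, u, snd w)) (unif_bits r))))
         \<le> 2 * measure_pmf.prob J S + sqrt (2 ^ r * \<theta>)"
proof -
  have fH: "finite H" and Hne: "H \<noteq> {}" and hl: "\<And>h x. h \<in> H \<Longrightarrow> length x = n \<Longrightarrow> length (h x) = r"
    using tu by (auto simp: two_universal_def)
  define A where "A = set_pmf J"
  define Ys where "Ys = snd ` A"
  define Sr where "Sr = {s::bool list. length s = r}"
  define Ay where "Ay y = {w\<in>A. snd w = y}" for y
  define c where "c = sqrt (2 ^ r * \<theta>)"
  have fA: "finite A" using finJ by (simp add: A_def)
  have fYs: "finite Ys" using fA by (simp add: Ys_def)
  have fSr: "finite Sr" by (simp add: Sr_def finite_bits)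
  have fAy: "finite (Ay y)" for y using fA by (simp add: Ay_def)
  define Real where "Real = bind_pmf J (\<lambda>w. map_pmf (\<lambda>h. (h, h (fst w), snd w)) (pmf_of_set H))"
  define Ideal where "Ideal = bind_pmf J (\<lambda>w. bind_pmf (pmf_of_set H) (\<lambda>h. map_pmf (\<lambda>u. (h, u, snd w)) (unif_bits r)))"
  have RealP: "pmf Real (h, s, y) = (if h \<in> H then (\<Sum>w\<in>Ay y. if h (fst w) = s then pmf J w else 0) / card H else 0)" for h s y
  proof -
    have "pmf Real (h, s, y) = (\<Sum>w\<in>A. pmf J w * (if h \<in> H \<and> h (fst w) = s \<and> snd w = y then 1 / card H else 0))"
      unfolding Real_def using fA fH Hne by (subst pmf_bind_finite[of A]) (simp_all add: A_def pmf_map_hash)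
    also have "\<dots> = (\<Sum>w\<in>A. if snd w = y then (if h \<in> H then (if h (fst w) = s then pmf J w else 0) / card H else 0) else 0)"
      by (intro sum.cong refl) auto
    also have "\<dots> = (\<Sum>w\<in>Ay y. (if h \<in> H then (if h (fst w) = s then pmf J w else 0) / card H else 0))"
      unfolding Ay_def using fA by (simp add: sum.inter_filter)
    also have "\<dots> = (if h \<in> H then (\<Sum>w\<in>Ay y. if h (fst w) = s then pmf J w else 0) / card H else 0)"
      by (simp add: sum_divide_distrib)
    finally show ?thesis .
  qed
  have IdP: "pmf Ideal (h, s, y) = (if h \<in> H \<and> length s = r then (\<Sum>w\<in>Ay y. pmf J w) / (card H * 2 ^ r) else 0)" for h s y
  proof -
    have "pmf Ideal (h, s, y) = (\<Sum>w\<in>A. pmf J w * (if h \<in> H \<and> length s = r \<and> snd w = y then 1 / (card H * 2 ^ r) else 0))"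
      unfolding Ideal_def using fA fH Hne by (subst pmf_bind_finite[of A]) (simp_all add: A_def pmf_ideal_inner)
    also have "\<dots> = (\<Sum>w\<in>A. if snd w = y then (if h \<in> H \<and> length s = r then pmf J w / (card H * 2 ^ r) else 0) else 0)"
      by (intro sum.cong refl) auto
    also have "\<dots> = (\<Sum>w\<in>Ay y. (if h \<in> H \<and> length s = r then pmf J w / (card H * 2 ^ r) else 0))"
      unfolding Ay_def using fA by (simp add: sum.inter_filter)
    also have "\<dots> = (if h \<in> H \<and> length s = r then (\<Sum>w\<in>Ay y. pmf J w) / (card H * 2 ^ r) else 0)"
      by (cases "h \<in> H \<and> length s = r") (auto simp: sum_divide_distrib)
    finally show ?thesis .
  qed
  define Z where "Z = H \<times> (Sr \<times> Ys)"
  have fZ: "finite Z" using fH fSr fYs by (simp add: Z_def)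
  have sR: "set_pmf Real \<subseteq> Z"
  proof
    fix z assume "z \<in> set_pmf Real"
    then obtain w h where w: "w \<in> set_pmf J" and h: "h \<in> H" and z: "z = (h, h (fst w), snd w)"
      unfolding Real_def using fH Hne by auto
    then show "z \<in> Z" unfolding Z_def Sr_def Ys_def A_def using hl[OF h lenJ[OF w]] by auto
  qed
  have sI: "set_pmf Ideal \<subseteq> Z"
    unfolding Ideal_def Z_def Sr_def Ys_def A_def using fH Hne by (auto simp: set_unif_bits)
  have "vdist Real Ideal = (\<Sum>z\<in>Z. \<bar>pmf Real z - pmf Ideal z\<bar>)"
    by (rule vdist_finite[OF fZ sR sI])
  also have "\<dots> = (\<Sum>h\<in>H. \<Sum>s\<in>Sr. \<Sum>y\<in>Ys. \<bar>pmf Real (h, s, y) - pmf Ideal (h, s, y)\<bar>)"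
    unfolding Z_def by (simp add: sum.cartesian_product)
  also have "\<dots> = (\<Sum>y\<in>Ys. \<Sum>h\<in>H. \<Sum>s\<in>Sr. \<bar>pmf Real (h, s, y) - pmf Ideal (h, s, y)\<bar>)"
    by (simp add: sum.swap[of _ Ys])
  also have "\<dots> \<le> (\<Sum>y\<in>Ys. 2 * (\<Sum>w\<in>Ay y \<inter> S. pmf J w) + c * (\<Sum>w\<in>Ay y. pmf J w))"
  proof (intro sum_mono)
    fix y assume y: "y \<in> Ys"
    define Fy where "Fy = (\<Sum>w\<in>Ay y. pmf J w)"
    have pt: "\<bar>pmf Real (h, s, y) - pmf Ideal (h, s, y)\<bar> =
         \<bar>(\<Sum>w\<in>Ay y. if h (fst w) = s then pmf J w else 0) - Fy / 2 ^ r\<bar> / card H" if "h \<in> H" "s \<in> Sr" for h s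
      using that fH Hne by (simp add: RealP IdP Sr_def Fy_def[symmetric] diff_divide_distrib[symmetric] field_simps)
    have eq: "(\<Sum>h\<in>H. \<Sum>s\<in>Sr. \<bar>pmf Real (h, s, y) - pmf Ideal (h, s, y)\<bar>)
       = (\<Sum>h\<in>H. \<Sum>s\<in>Sr. \<bar>(\<Sum>w\<in>Ay y. if h (fst w) = s then pmf J w else 0) - Fy / 2 ^ r\<bar>) / card H"
      by (simp add: pt sum_divide_distrib)
    have lh: "(\<Sum>h\<in>H. \<Sum>s\<in>Sr. \<bar>(\<Sum>w\<in>Ay y. if h (fst w) = s then pmf J w else 0) - Fy / 2 ^ r\<bar>)
        \<le> real (card H) * (2 * (\<Sum>w\<in>Ay y \<inter> S. pmf J w) + c * (\<Sum>w\<in>Ay y. pmf J w))"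
      unfolding Sr_def c_def Fy_def
    proof (rule lhl_y[OF fAy tu _ _ _ th])
      show "\<And>i. i \<in> Ay y \<Longrightarrow> length (fst i) = n" using lenJ by (auto simp: Ay_def A_def)
      show "inj_on fst (Ay y)" by (auto simp: Ay_def inj_on_def prod_eq_iff)
      show "\<And>i. i \<in> Ay y \<Longrightarrow> 0 \<le> pmf J i" by simp
      show "\<And>i. i \<in> Ay y \<Longrightarrow> i \<notin> S \<Longrightarrow> pmf J i \<le> \<theta> * (\<Sum>j\<in>Ay y. pmf J j)"
        using good finJ by (auto simp: Ay_def A_def pmf_map_snd_sum)
    qed
    have "card H > 0" using fH Hne by (simp add: card_gt_0_iff)
    then show "(\<Sum>h\<in>H. \<Sum>s\<in>Sr. \<bar>pmf Real (h, s, y) - pmf Ideal (h, s, y)\<bar>) \<le> 2 * (\<Sum>w\<in>Ay y \<inter> S. pmf J w) + c * (\<Sum>w\<in>Ay y. pmf J w)"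
      unfolding eq using lh by (simp add: divide_le_eq mult.commute)
  qed
  also have "\<dots> = 2 * (\<Sum>y\<in>Ys. \<Sum>w\<in>Ay y. if w \<in> S then pmf J w else 0) + c * (\<Sum>y\<in>Ys. \<Sum>w\<in>Ay y. pmf J w)"
    using fAy by (simp add: sum.distrib sum_distrib_left sum.If_cases Int_def)
  also have "(\<Sum>y\<in>Ys. \<Sum>w\<in>Ay y. if w \<in> S then pmf J w else 0) = (\<Sum>w\<in>A. if w \<in> S then pmf J w else 0)"
    unfolding Ys_def Ay_def by (rule sum.image_gen[symmetric, OF fA])
  also have "(\<Sum>y\<in>Ys. \<Sum>w\<in>Ay y. pmf J w) = (\<Sum>w\<in>A. pmf J w)"
    unfolding Ys_def Ay_def by (rule sum.image_gen[symmetric, OF fA])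
  also have "(\<Sum>w\<in>A. pmf J w) = 1" using fA by (simp add: A_def sum_pmf_eq_1)
  also have "(\<Sum>w\<in>A. if w \<in> S then pmf J w else 0) = measure_pmf.prob J S"
  proof -
    have "(\<Sum>w\<in>A. if w \<in> S then pmf J w else 0) = (\<Sum>w\<in>A \<inter> S. pmf J w)"
      using fA by (simp add: sum.If_cases)
    also have "\<dots> = measure_pmf.prob J (A \<inter> S)" using fA by (simp add: measure_measure_pmf_finite)
    also have "\<dots> = measure_pmf.prob J S" using measure_Int_set_pmf[of J S] by (simp add: A_def Int_commute)
    finally show ?thesis .
  qed
  finally show ?thesis by (simp add: Real_def Ideal_def c_def)
qed

lemma ln_le_div_e: "(x::real) > 0 \<Longrightarrow> ln x \<le> x / exp 1"
proof -
  assume x: "x > 0"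
  have "ln (x / exp 1) \<le> x / exp 1 - 1" using ln_le_minus_one[of "x / exp 1"] x by simp
  also have "ln (x / exp 1) = ln x - 1" using x by (simp add: ln_div)
  finally show ?thesis by simp
qed

lemma p_ln_sq_le_1:
  fixes p :: real assumes p: "0 < p" "p \<le> 1"
  shows "p * (ln p)\<^sup>2 \<le> 1"
proof -
  define v where "v = sqrt p"
  have v: "0 < v" "v \<le> 1" using p by (auto simp: v_def)
  have pv: "p = v\<^sup>2" using p by (simp add: v_def)
  have lnp: "ln p = 2 * ln v" using v by (simp add: pv ln_realpow)
  have e2: "exp 1 \<ge> (2::real)" using exp_ge_add_one_self[of 1] by simp
  have "ln (1 / v) \<le> (1 / v) / exp 1" using v by (intro ln_le_div_e) simp
  then have a: "- ln v \<le> 1 / (v * exp 1)" using v by (simp add: ln_div)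
  have "v * (- ln v) \<le> v * (1 / (v * exp 1))" using a v by (intro mult_left_mono) auto
  also have "\<dots> = 1 / exp 1" using v by simp
  also have "\<dots> \<le> 1 / 2" using e2 by (simp add: divide_le_eq)
  finally have b: "- (v * ln v) \<le> 1 / 2" by simp
  have c: "v * ln v \<le> 0" using v by (simp add: mult_nonneg_nonpos)
  have "(v * ln v)\<^sup>2 \<le> (1/2)\<^sup>2" using b c by (intro power2_le_iff_abs_le[THEN iffD2]) auto
  then have "(v * ln v)\<^sup>2 \<le> 1 / 4" by (simp add: power2_eq_square)
  then have "4 * (v * ln v)\<^sup>2 \<le> 1" by linarith
  moreover have "p * (ln p)\<^sup>2 = 4 * (v * ln v)\<^sup>2" by (simp only: lnp) (simp add: pv power2_eq_square algebra_simps)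
  ultimately show ?thesis by simp
qed

lemma exp_neg_le_quad:
  fixes u :: real assumes u: "u \<ge> 0"
  shows "exp (- u) \<le> 1 - u + u\<^sup>2 / 2"
proof -
  define g where "g x = 1 - x + x\<^sup>2 / 2 - exp (- x)" for x :: real
  have "g 0 \<le> g u"
  proof (rule DERIV_nonneg_imp_nondecreasing[OF u])
    fix x :: real assume "0 \<le> x" "x \<le> u"
    have "(g has_real_derivative (- 1 + x + exp (- x))) (at x)"
      unfolding g_def by (auto intro!: derivative_eq_intros simp: power2_eq_square)
    moreover have "- 1 + x + exp (- x) \<ge> 0" using exp_ge_add_one_self[of "- x"] by simp
    ultimately show "\<exists>y. (g has_real_derivative y) (at x) \<and> 0 \<le> y" by blast
  qed
  then show ?thesis by (simp add: g_def)
qed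

lemma prod_list_pos': fixes h :: "'a \<Rightarrow> real" shows "(\<And>x. x \<in> set xs \<Longrightarrow> h x > 0) \<Longrightarrow> prod_list (map h xs) > 0"
  by (induction xs) auto

lemma ln_prod_list:
  fixes h :: "'a \<Rightarrow> real"
  shows "(\<And>x. x \<in> set xs \<Longrightarrow> h x > 0) \<Longrightarrow> ln (prod_list (map h xs)) = sum_list (map (\<lambda>x. ln (h x)) xs)"
proof (induction xs)
  case Nil then show ?case by simp
next
  case (Cons a xs)
  have "prod_list (map h xs) > 0" using Cons.prems by (intro prod_list_pos') auto
  moreover have "h a > 0" using Cons.prems by simp
  ultimately have "ln (h a * prod_list (map h xs)) = ln (h a) + ln (prod_list (map h xs))" by (intro ln_mult_pos)
  then show ?case using Cons by simp
qed

lemma prod_list_exp: fixes c :: real shows "prod_list (map (\<lambda>x. exp (c * f x)) xs) = exp (c * sum_list (map f xs))"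
  by (induction xs) (simp_all add: mult_exp_exp distrib_left)

lemma expectation_iid_prod:
  fixes g :: "'a \<Rightarrow> real"
  assumes fQ: "finite (set_pmf Q)"
  shows "measure_pmf.expectation (iid Q N) (\<lambda>ws. prod_list (map g ws)) = (measure_pmf.expectation Q g) ^ N"
proof (induction N)
  case 0 show ?case unfolding iid_0 power_0 by (subst integral_measure_pmf[of "{[]}"]) auto
next
  case (Suc N)
  have "measure_pmf.expectation (iid Q (Suc N)) (\<lambda>ws. prod_list (map g ws))
      = (\<Sum>a\<in>set_pmf Q. pmf Q a * measure_pmf.expectation (map_pmf (\<lambda>xs. a # xs) (iid Q N)) (\<lambda>ws. prod_list (map g ws)))"
    unfolding iid_Suc using fQ by (subst pmf_expectation_bind[of "set_pmf Q"]) (auto intro: finite_iid)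
  also have "\<dots> = (\<Sum>a\<in>set_pmf Q. pmf Q a * g a) * measure_pmf.expectation (iid Q N) (\<lambda>ws. prod_list (map g ws))"
    by (simp add: sum_distrib_right sum_distrib_left mult_ac)
  also have "(\<Sum>a\<in>set_pmf Q. pmf Q a * g a) = measure_pmf.expectation Q g"
    using fQ by (subst integral_measure_pmf[of "set_pmf Q"]) auto
  finally show ?case using Suc by simp
qed

lemma cond_entropy_sum:
  fixes Q :: "('a \<times> 'b) pmf"
  assumes fQ: "finite (set_pmf Q)"
  shows "cond_entropy_pmf Q = - (\<Sum>w\<in>set_pmf Q. pmf Q w * log 2 (pmf Q w / pmf (map_pmf snd Q) (snd w)))"
proof -
  let ?QY = "map_pmf snd Q"
  have pos: "pmf ?QY (snd w) > 0" if "w \<in> set_pmf Q" for w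
    using that by (simp add: pmf_positive)
  have "(\<Sum>y\<in>set_pmf ?QY. pmf ?QY y * log 2 (pmf ?QY y))
      = (\<Sum>y\<in>snd ` set_pmf Q. (\<Sum>w\<in>{w\<in>set_pmf Q. snd w = y}. pmf Q w) * log 2 (pmf ?QY y))"
    using fQ by (simp add: pmf_map_snd_sum)
  also have "\<dots> = (\<Sum>y\<in>snd ` set_pmf Q. \<Sum>w\<in>{w\<in>set_pmf Q. snd w = y}. pmf Q w * log 2 (pmf ?QY (snd w)))"
    by (intro sum.cong refl) (auto simp: sum_distrib_right)
  also have "\<dots> = (\<Sum>w\<in>set_pmf Q. pmf Q w * log 2 (pmf ?QY (snd w)))"
    by (rule sum.image_gen[symmetric, OF fQ])
  finally have hy0: "(\<Sum>y\<in>set_pmf ?QY. pmf ?QY y * log 2 (pmf ?QY y)) = (\<Sum>w\<in>set_pmf Q. pmf Q w * log 2 (pmf ?QY (snd w)))" .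
  have hy: "shannon_H ?QY = - (\<Sum>w\<in>set_pmf Q. pmf Q w * log 2 (pmf ?QY (snd w)))"
    unfolding shannon_H_def hy0 ..
  have "cond_entropy_pmf Q = - (\<Sum>w\<in>set_pmf Q. pmf Q w * log 2 (pmf Q w)) + (\<Sum>w\<in>set_pmf Q. pmf Q w * log 2 (pmf ?QY (snd w)))"
    unfolding cond_entropy_pmf_def hy by (simp add: shannon_H_def)
  also have "\<dots> = - (\<Sum>w\<in>set_pmf Q. pmf Q w * log 2 (pmf Q w / pmf ?QY (snd w)))"
  proof -
    have "(\<Sum>w\<in>set_pmf Q. pmf Q w * log 2 (pmf Q w / pmf ?QY (snd w)))
        = (\<Sum>w\<in>set_pmf Q. pmf Q w * log 2 (pmf Q w) - pmf Q w * log 2 (pmf ?QY (snd w)))"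
      by (intro sum.cong refl) (simp add: log_divide_pos pos pmf_positive right_diff_distrib)
    then show ?thesis by (simp add: sum_subtractf)
  qed
  finally show ?thesis .
qed

lemma aep:
  fixes Q :: "(bool \<times> 'y) pmf" and N :: nat and \<delta> :: real
  assumes fQ: "finite (set_pmf Q)" and N: "N \<ge> 1" and \<delta>: "\<delta> > 0"
    and big: "ln (real N) \<le> real N * (\<delta> * ln 2)\<^sup>2 / 4"
  shows "measure_pmf.prob (iid Q N) {ws. prod_list (map (pmf Q) ws) >
           2 powr (- (real N * (cond_entropy_pmf Q - \<delta>))) * prod_list (map (pmf (map_pmf snd Q)) (map snd ws))} \<le> 1 / real N"
proof -
  define QY where "QY = map_pmf snd Q"
  define Hc where "Hc = cond_entropy_pmf Q"
  define \<theta> where "\<theta> = 2 powr (- (real N * (Hc - \<delta>)))"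
  define f where "f w = pmf Q w / pmf QY (snd w)" for w
  define t where "t = \<delta> * ln 2 / 2"
  define g where "g w = exp (t * ln (f w))" for w
  define B where "B = {ws. prod_list (map (pmf Q) ws) > \<theta> * prod_list (map (pmf QY) (map snd ws))}"
  have t0: "t > 0" using \<delta> by (simp add: t_def)
  have th0: "\<theta> > 0" by (simp add: \<theta>_def)
  have QYpos: "pmf QY (snd w) > 0" if "w \<in> set_pmf Q" for w
    using that by (simp add: QY_def pmf_positive)
  have Qle: "pmf Q w \<le> pmf QY (snd w)" for w
  proof -
    have "pmf Q w = measure Q {w}" by (simp add: measure_pmf_single)
    also have "\<dots> \<le> measure Q (snd -` {snd w})" by (intro measure_pmf.finite_measure_mono) auto
    also have "\<dots> = pmf QY (snd w)" by (simp add: QY_def pmf_map)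
    finally show ?thesis .
  qed
  have fpos: "0 < f w" "f w \<le> 1" if "w \<in> set_pmf Q" for w
    using that QYpos[OF that] Qle[of w] by (auto simp: f_def pmf_positive divide_le_eq)
  have EQ: "measure_pmf.expectation Q h = (\<Sum>w\<in>set_pmf Q. pmf Q w * h w)" for h :: "bool \<times> 'y \<Rightarrow> real"
    using fQ by (subst integral_measure_pmf[of "set_pmf Q"]) auto
  have E1: "(\<Sum>w\<in>set_pmf Q. pmf Q w * ln (f w)) = - Hc * ln 2"
  proof -
    have "Hc = - (\<Sum>w\<in>set_pmf Q. pmf Q w * log 2 (f w))"
      unfolding Hc_def f_def QY_def by (rule cond_entropy_sum[OF fQ])
    also have "\<dots> = - (\<Sum>w\<in>set_pmf Q. pmf Q w * ln (f w)) / ln 2"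
      by (simp add: log_def sum_divide_distrib)
    finally show ?thesis by simp
  qed
  have E2: "(\<Sum>w\<in>set_pmf Q. pmf Q w * (ln (f w))\<^sup>2) \<le> 2"
  proof -
    have "(\<Sum>w\<in>set_pmf Q. pmf Q w * (ln (f w))\<^sup>2) \<le> (\<Sum>w\<in>set_pmf Q. pmf QY (snd w))"
    proof (intro sum_mono)
      fix w assume w: "w \<in> set_pmf Q"
      have "pmf Q w * (ln (f w))\<^sup>2 = pmf QY (snd w) * (f w * (ln (f w))\<^sup>2)"
        using QYpos[OF w] by (simp add: f_def)
      also have "\<dots> \<le> pmf QY (snd w) * 1"
        using fpos[OF w] by (intro mult_left_mono p_ln_sq_le_1) auto
      finally show "pmf Q w * (ln (f w))\<^sup>2 \<le> pmf QY (snd w)" by simp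
    qed
    also have "\<dots> \<le> (\<Sum>w\<in>(UNIV::bool set) \<times> set_pmf QY. pmf QY (snd w))"
    proof (rule sum_mono2)
      show "finite ((UNIV::bool set) \<times> set_pmf QY)" using fQ by (simp add: QY_def)
      show "set_pmf Q \<subseteq> (UNIV::bool set) \<times> set_pmf QY" by (force simp: QY_def)
    qed auto
    also have "\<dots> = (\<Sum>x\<in>(UNIV::bool set). \<Sum>y\<in>set_pmf QY. pmf QY y)"
      unfolding sum.cartesian_product by (simp add: case_prod_beta)
    also have "\<dots> = 2" using fQ by (simp add: QY_def sum_pmf_eq_1)
    finally show ?thesis .
  qed
  have E3: "measure_pmf.expectation Q g \<le> exp (- t * Hc * ln 2 + t\<^sup>2)"
  proof -
    have "measure_pmf.expectation Q g = (\<Sum>w\<in>set_pmf Q. pmf Q w * g w)" by (rule EQ)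
    also have "\<dots> \<le> (\<Sum>w\<in>set_pmf Q. pmf Q w * (1 + t * ln (f w) + t\<^sup>2 * (ln (f w))\<^sup>2 / 2))"
    proof (intro sum_mono mult_left_mono)
      fix w assume w: "w \<in> set_pmf Q"
      have u: "- (t * ln (f w)) \<ge> 0" using fpos[OF w] t0 by (simp add: mult_nonneg_nonpos)
      have "g w = exp (- (- (t * ln (f w))))" by (simp add: g_def)
      also have "\<dots> \<le> 1 - (- (t * ln (f w))) + (- (t * ln (f w)))\<^sup>2 / 2" by (rule exp_neg_le_quad[OF u])
      finally show "g w \<le> 1 + t * ln (f w) + t\<^sup>2 * (ln (f w))\<^sup>2 / 2" by (simp add: power_mult_distrib)
    qed simp
    also have "\<dots> = (\<Sum>w\<in>set_pmf Q. pmf Q w) + t * (\<Sum>w\<in>set_pmf Q. pmf Q w * ln (f w)) + t\<^sup>2 / 2 * (\<Sum>w\<in>set_pmf Q. pmf Q w * (ln (f w))\<^sup>2)"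
      by (simp add: sum.distrib sum_distrib_left distrib_left algebra_simps)
    also have "\<dots> \<le> 1 + t * (- Hc * ln 2) + t\<^sup>2 / 2 * 2"
      using fQ E1 E2 t0 by (intro add_mono mult_left_mono) (auto simp: sum_pmf_eq_1)
    also have "\<dots> = 1 + (- t * Hc * ln 2 + t\<^sup>2)" by simp
    also have "\<dots> \<le> exp (- t * Hc * ln 2 + t\<^sup>2)" by (rule exp_ge_add_one_self)
    finally show ?thesis .
  qed
  define u where "u ws = prod_list (map g ws)" for ws
  define c where "c = exp (t * ln \<theta>)"
  have c0: "c > 0" by (simp add: c_def)
  have sub: "B \<inter> set_pmf (iid Q N) \<subseteq> {ws. c \<le> u ws}"
  proof
    fix ws assume ws: "ws \<in> B \<inter> set_pmf (iid Q N)"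
    have el: "w \<in> set_pmf Q" if "w \<in> set ws" for w using ws that by (auto intro: set_iid_elem)
    have p1: "prod_list (map (pmf QY) (map snd ws)) > 0"
      using el QYpos by (auto intro!: prod_list_pos' simp: o_def)
    have gt: "prod_list (map (pmf Q) ws) > \<theta> * prod_list (map (pmf QY) (map snd ws))" using ws by (simp add: B_def)
    have "ln (\<theta> * prod_list (map (pmf QY) (map snd ws))) < ln (prod_list (map (pmf Q) ws))"
    proof (rule ln_less_cancel_iff[THEN iffD2])
      show "0 < \<theta> * prod_list (map (pmf QY) (map snd ws))" using th0 p1 by simp
      then show "0 < prod_list (map (pmf Q) ws)" using gt by linarith
    qed (rule gt)
    also have "ln (prod_list (map (pmf Q) ws)) = sum_list (map (\<lambda>w. ln (pmf Q w)) ws)"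
      using el by (intro ln_prod_list) (auto simp: pmf_positive)
    also have "ln (\<theta> * prod_list (map (pmf QY) (map snd ws))) = ln \<theta> + sum_list (map (\<lambda>w. ln (pmf QY (snd w))) ws)"
    proof -
      have "ln (prod_list (map (\<lambda>w. pmf QY (snd w)) ws)) = sum_list (map (\<lambda>w. ln (pmf QY (snd w))) ws)"
        using el QYpos by (intro ln_prod_list) auto
      then show ?thesis using th0 p1 by (simp add: ln_mult_pos o_def)
    qed
    finally have "ln \<theta> < sum_list (map (\<lambda>w. ln (pmf Q w)) ws) - sum_list (map (\<lambda>w. ln (pmf QY (snd w))) ws)"
      by simp
    also have "\<dots> = sum_list (map (\<lambda>w. ln (f w)) ws)"
    proof -
      have "sum_list (map (\<lambda>w. ln (f w)) ws) = sum_list (map (\<lambda>w. ln (pmf Q w) - ln (pmf QY (snd w))) ws)"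
      proof (intro arg_cong[where f=sum_list] map_cong refl)
        fix w assume "w \<in> set ws" then have w: "w \<in> set_pmf Q" by (rule el)
        have "pmf Q w > 0" using w by (simp add: pmf_positive)
        then show "ln (f w) = ln (pmf Q w) - ln (pmf QY (snd w))" using QYpos[OF w] by (simp add: f_def ln_div)
      qed
      then show ?thesis by (simp add: sum_list_subtractf)
    qed
    finally have "t * ln \<theta> \<le> t * sum_list (map (\<lambda>w. ln (f w)) ws)" using t0 by simp
    then have "c \<le> exp (t * sum_list (map (\<lambda>w. ln (f w)) ws))" by (simp add: c_def)
    also have "\<dots> = u ws" unfolding u_def g_def by (rule prod_list_exp[of t "\<lambda>w. ln (f w)", symmetric])
    finally show "ws \<in> {ws. c \<le> u ws}" by simp
  qed
  have "measure_pmf.prob (iid Q N) B = measure_pmf.prob (iid Q N) (B \<inter> set_pmf (iid Q N))"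
    by (simp add: measure_Int_set_pmf)
  also have "\<dots> \<le> measure_pmf.prob (iid Q N) {ws. c \<le> u ws}"
    by (intro measure_pmf.finite_measure_mono sub) auto
  also have "\<dots> \<le> measure_pmf.expectation (iid Q N) u / c"
  proof -
    have unn: "0 \<le> prod_list (map g ws)" for ws by (induction ws) (auto simp: g_def)
    have "measure_pmf.prob (iid Q N) {x \<in> space (measure_pmf (iid Q N)). c \<le> u x} \<le> measure_pmf.expectation (iid Q N) u / c"
      using fQ c0 by (intro integral_Markov_inequality_measure[where A = "{}"])
        (auto intro!: integrable_measure_pmf_finite finite_iid AE_I2 simp: u_def unn)
    then show ?thesis by simp
  qed
  also have "measure_pmf.expectation (iid Q N) u = (measure_pmf.expectation Q g) ^ N"
    unfolding u_def by (rule expectation_iid_prod[OF fQ])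
  also have "(measure_pmf.expectation Q g) ^ N \<le> exp (- t * Hc * ln 2 + t\<^sup>2) ^ N"
  proof (intro power_mono E3)
    show "0 \<le> measure_pmf.expectation Q g" by (intro integral_nonneg_AE) (simp add: g_def)
  qed
  also have "exp (- t * Hc * ln 2 + t\<^sup>2) ^ N / c = exp (- (real N * (\<delta> * ln 2)\<^sup>2 / 4))"
  proof -
    have lt: "ln \<theta> = - (real N * (Hc - \<delta>)) * ln 2" by (simp add: \<theta>_def ln_powr)
    have "exp (- t * Hc * ln 2 + t\<^sup>2) ^ N / c = exp (real N * (- t * Hc * ln 2 + t\<^sup>2) - t * ln \<theta>)"
      unfolding c_def exp_of_nat_mult[symmetric] exp_diff ..
    also have "\<dots> = exp (real N * (- t * Hc * ln 2 + t\<^sup>2) - t * (- (real N * (Hc - \<delta>)) * ln 2))"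
      using lt by simp
    finally have "exp (- t * Hc * ln 2 + t\<^sup>2) ^ N / c = exp (real N * (- t * Hc * ln 2 + t\<^sup>2) - t * (- (real N * (Hc - \<delta>)) * ln 2))" .
    also have "real N * (- t * Hc * ln 2 + t\<^sup>2) - t * (- (real N * (Hc - \<delta>)) * ln 2) = - (real N * (\<delta> * ln 2)\<^sup>2 / 4)"
      by (simp add: t_def power2_eq_square algebra_simps)
    finally show ?thesis .
  qed
  also have "exp (- (real N * (\<delta> * ln 2)\<^sup>2 / 4)) \<le> exp (- ln (real N))" using big by simp
  also have "\<dots> = 1 / real N" using N by (simp add: exp_minus inverse_eq_divide)
  finally show ?thesis using c0 by (simp add: B_def QY_def Hc_def \<theta>_def divide_right_mono)
qed

definition Pg :: "nat \<Rightarrow> (nat \<Rightarrow> (bool list \<Rightarrow> bool list) set) \<Rightarrow> (bool list \<Rightarrow> bool list) list pmf" where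
  "Pg L Hf = seq_pmf (map (\<lambda>l. pmf_of_set (Hf l)) [0..<L])"

definition Useq :: "nat \<Rightarrow> (nat \<Rightarrow> nat) \<Rightarrow> bool list list pmf" where
  "Useq L r = seq_pmf (map (\<lambda>l. unif_bits (r l)) [0..<L])"

definition hyb where
  "hyb L qX W Hf r N j = bind_pmf (Pg L Hf) (\<lambda>G. bind_pmf (iid (joint_XZ L qX W) N) (\<lambda>D.
      map_pmf (\<lambda>Us. (G, map snd D, map (\<lambda>l. if l < j then (G ! l) (cols L D ! l) else Us ! l) [0..<L])) (Useq L r)))"

definition Fj where
  "Fj L j Gr Ur = (\<lambda>(h, v, y). (Gr[j := h], map fst y,
      map (\<lambda>l. if l < j then (Gr ! l) (map (\<lambda>c. snd c ! l) y) else if l = j then v else Ur ! l) [0..<L]))"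

definition yD :: "nat \<Rightarrow> (bool list \<times> 'z) list \<Rightarrow> ('z \<times> bool list) list" where
  "yD j D = map (\<lambda>w. (snd w, take j (fst w))) D"

definition xD :: "nat \<Rightarrow> (bool list \<times> 'z) list \<Rightarrow> bool list" where
  "xD j D = map (\<lambda>w. fst w ! j) D"

lemma Pg_length: "G \<in> set_pmf (Pg L Hf) \<Longrightarrow> length G = L"
  unfolding Pg_def by (drule seq_pmf_length) simp

lemma Pg_resample: "j < L \<Longrightarrow> bind_pmf (Pg L Hf) (\<lambda>Gr. map_pmf (\<lambda>h. Gr[j := h]) (pmf_of_set (Hf j))) = Pg L Hf"
  unfolding Pg_def using seq_pmf_resample[of j "map (\<lambda>l. pmf_of_set (Hf l)) [0..<L]"] by simp

lemma Useq_resample: "j < L \<Longrightarrow> bind_pmf (Useq L r) (\<lambda>Ur. map_pmf (\<lambda>u. Ur[j := u]) (unif_bits (r j))) = Useq L r"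
  unfolding Useq_def using seq_pmf_resample[of j "map (\<lambda>l. unif_bits (r l)) [0..<L]"] by simp

lemma O_real_eq:
  assumes "j < L" "length Gr = L"
  shows "(Gr[j := h], map snd D, map (\<lambda>l. if l < Suc j then (Gr[j := h] ! l) (cols L D ! l) else Ur[j := u] ! l) [0..<L])
       = Fj L j Gr Ur (h, h (xD j D), yD j D)"
  using assms by (auto simp: Fj_def cols_def xD_def yD_def nth_list_update comp_def nth_take intro!: map_cong)

lemma O_ideal_eq:
  assumes "j < L" "length Gr = L" "length Ur = L"
  shows "(Gr[j := h], map snd D, map (\<lambda>l. if l < j then (Gr[j := h] ! l) (cols L D ! l) else Ur[j := u] ! l) [0..<L])
       = Fj L j Gr Ur (h, u, yD j D)"
  using assms by (auto simp: Fj_def cols_def xD_def yD_def nth_list_update comp_def nth_take intro!: map_cong)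

lemma swap3:
  "bind_pmf A (\<lambda>a. bind_pmf B (\<lambda>b. bind_pmf C (\<lambda>c. K a b c))) = bind_pmf C (\<lambda>c. bind_pmf B (\<lambda>b. bind_pmf A (\<lambda>a. K a b c)))"
proof -
  have "bind_pmf A (\<lambda>a. bind_pmf B (\<lambda>b. bind_pmf C (\<lambda>c. K a b c))) = bind_pmf A (\<lambda>a. bind_pmf C (\<lambda>c. bind_pmf B (\<lambda>b. K a b c)))"
    by (intro bind_pmf_cong refl bind_commute_pmf)
  also have "\<dots> = bind_pmf C (\<lambda>c. bind_pmf A (\<lambda>a. bind_pmf B (\<lambda>b. K a b c)))"
    by (rule bind_commute_pmf)
  also have "\<dots> = bind_pmf C (\<lambda>c. bind_pmf B (\<lambda>b. bind_pmf A (\<lambda>a. K a b c)))"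
    by (intro bind_pmf_cong refl bind_commute_pmf)
  finally show ?thesis .
qed

lemma hyb_real:
  assumes j: "j < L"
  shows "hyb L qX W Hf r N (Suc j) = bind_pmf (Pg L Hf) (\<lambda>Gr. bind_pmf (Useq L r) (\<lambda>Ur. map_pmf (Fj L j Gr Ur)
           (bind_pmf (map_pmf (\<lambda>D. (xD j D, yD j D)) (iid (joint_XZ L qX W) N))
              (\<lambda>w. map_pmf (\<lambda>h. (h, h (fst w), snd w)) (pmf_of_set (Hf j))))))"
proof -
  let ?IQ = "iid (joint_XZ L qX W) N"
  let ?Hj = "pmf_of_set (Hf j)"
  let ?Uj = "unif_bits (r j)"
  let ?O = "\<lambda>G D Us. (G, map snd D, map (\<lambda>l. if l < Suc j then (G ! l) (cols L D ! l) else Us ! l) [0..<L])"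
  have "hyb L qX W Hf r N (Suc j) = bind_pmf (bind_pmf (Pg L Hf) (\<lambda>Gr. map_pmf (\<lambda>h. Gr[j := h]) ?Hj)) (\<lambda>G. bind_pmf ?IQ (\<lambda>D.
      map_pmf (?O G D) (bind_pmf (Useq L r) (\<lambda>Ur. map_pmf (\<lambda>u. Ur[j := u]) ?Uj))))"
    unfolding hyb_def Pg_resample[OF j] Useq_resample[OF j] ..
  also have "\<dots> = bind_pmf (Pg L Hf) (\<lambda>Gr. bind_pmf ?Hj (\<lambda>h. bind_pmf ?IQ (\<lambda>D. bind_pmf (Useq L r) (\<lambda>Ur.
      bind_pmf ?Uj (\<lambda>u. return_pmf (?O (Gr[j := h]) D (Ur[j := u])))))))"
    by (simp add: bind_assoc_pmf bind_map_pmf map_bind_pmf map_pmf_def bind_return_pmf)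
  also have "\<dots> = bind_pmf (Pg L Hf) (\<lambda>Gr. bind_pmf ?Hj (\<lambda>h. bind_pmf ?IQ (\<lambda>D. bind_pmf (Useq L r) (\<lambda>Ur.
      return_pmf (Fj L j Gr Ur (h, h (xD j D), yD j D))))))"
  proof (intro bind_pmf_cong refl)
    fix Gr h D Ur assume Gr: "Gr \<in> set_pmf (Pg L Hf)"
    show "bind_pmf ?Uj (\<lambda>u. return_pmf (?O (Gr[j := h]) D (Ur[j := u]))) = return_pmf (Fj L j Gr Ur (h, h (xD j D), yD j D))"
      unfolding O_real_eq[OF j Pg_length[OF Gr]] by simp
  qed
  also have "\<dots> = bind_pmf (Pg L Hf) (\<lambda>Gr. bind_pmf (Useq L r) (\<lambda>Ur. bind_pmf ?IQ (\<lambda>D. bind_pmf ?Hj (\<lambda>h.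
      return_pmf (Fj L j Gr Ur (h, h (xD j D), yD j D))))))"
    by (intro bind_pmf_cong refl swap3)
  also have "\<dots> = bind_pmf (Pg L Hf) (\<lambda>Gr. bind_pmf (Useq L r) (\<lambda>Ur. map_pmf (Fj L j Gr Ur)
           (bind_pmf (map_pmf (\<lambda>D. (xD j D, yD j D)) ?IQ)
              (\<lambda>w. map_pmf (\<lambda>h. (h, h (fst w), snd w)) ?Hj))))"
    by (simp add: bind_map_pmf map_bind_pmf map_pmf_comp map_pmf_def bind_assoc_pmf bind_return_pmf)
  finally show ?thesis .
qed

lemma hyb_ideal:
  assumes j: "j < L"
  shows "hyb L qX W Hf r N j = bind_pmf (Pg L Hf) (\<lambda>Gr. bind_pmf (Useq L r) (\<lambda>Ur. map_pmf (Fj L j Gr Ur)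
           (bind_pmf (map_pmf (\<lambda>D. (xD j D, yD j D)) (iid (joint_XZ L qX W) N))
              (\<lambda>w. bind_pmf (pmf_of_set (Hf j)) (\<lambda>h. map_pmf (\<lambda>u. (h, u, snd w)) (unif_bits (r j)))))))"
proof -
  let ?IQ = "iid (joint_XZ L qX W) N"
  let ?Hj = "pmf_of_set (Hf j)"
  let ?Uj = "unif_bits (r j)"
  let ?O = "\<lambda>G D Us. (G, map snd D, map (\<lambda>l. if l < j then (G ! l) (cols L D ! l) else Us ! l) [0..<L])"
  have "hyb L qX W Hf r N j = bind_pmf (bind_pmf (Pg L Hf) (\<lambda>Gr. map_pmf (\<lambda>h. Gr[j := h]) ?Hj)) (\<lambda>G. bind_pmf ?IQ (\<lambda>D.
      map_pmf (?O G D) (bind_pmf (Useq L r) (\<lambda>Ur. map_pmf (\<lambda>u. Ur[j := u]) ?Uj))))"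
    unfolding hyb_def Pg_resample[OF j] Useq_resample[OF j] ..
  also have "\<dots> = bind_pmf (Pg L Hf) (\<lambda>Gr. bind_pmf ?Hj (\<lambda>h. bind_pmf ?IQ (\<lambda>D. bind_pmf (Useq L r) (\<lambda>Ur.
      bind_pmf ?Uj (\<lambda>u. return_pmf (?O (Gr[j := h]) D (Ur[j := u])))))))"
    by (simp add: bind_assoc_pmf bind_map_pmf map_bind_pmf map_pmf_def bind_return_pmf)
  also have "\<dots> = bind_pmf (Pg L Hf) (\<lambda>Gr. bind_pmf ?Hj (\<lambda>h. bind_pmf ?IQ (\<lambda>D. bind_pmf (Useq L r) (\<lambda>Ur.
      bind_pmf ?Uj (\<lambda>u. return_pmf (Fj L j Gr Ur (h, u, yD j D)))))))"
  proof (intro bind_pmf_cong refl)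
    fix Gr h D Ur u assume Gr: "Gr \<in> set_pmf (Pg L Hf)" and Ur: "Ur \<in> set_pmf (Useq L r)"
    have lu: "length Ur = L" using seq_pmf_length[of Ur "map (\<lambda>l. unif_bits (r l)) [0..<L]"] Ur by (simp add: Useq_def)
    show "return_pmf (?O (Gr[j := h]) D (Ur[j := u])) = return_pmf (Fj L j Gr Ur (h, u, yD j D))"
      unfolding O_ideal_eq[OF j Pg_length[OF Gr] lu] ..
  qed
  also have "\<dots> = bind_pmf (Pg L Hf) (\<lambda>Gr. bind_pmf (Useq L r) (\<lambda>Ur. bind_pmf ?IQ (\<lambda>D. bind_pmf ?Hj (\<lambda>h.
      bind_pmf ?Uj (\<lambda>u. return_pmf (Fj L j Gr Ur (h, u, yD j D)))))))"
    by (intro bind_pmf_cong refl swap3)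
  also have "\<dots> = bind_pmf (Pg L Hf) (\<lambda>Gr. bind_pmf (Useq L r) (\<lambda>Ur. map_pmf (Fj L j Gr Ur)
           (bind_pmf (map_pmf (\<lambda>D. (xD j D, yD j D)) ?IQ)
              (\<lambda>w. bind_pmf ?Hj (\<lambda>h. map_pmf (\<lambda>u. (h, u, snd w)) ?Uj)))))"
    by (simp add: bind_map_pmf map_bind_pmf map_pmf_comp map_pmf_def bind_assoc_pmf bind_return_pmf)
  finally show ?thesis .
qed

lemma fin_Pg: "(\<And>l. l < L \<Longrightarrow> finite (Hf l) \<and> Hf l \<noteq> {}) \<Longrightarrow> finite (set_pmf (Pg L Hf))"
  unfolding Pg_def by (intro finite_seq_pmf) auto

lemma fin_Useq: "finite (set_pmf (Useq L r))"
  unfolding Useq_def by (intro finite_seq_pmf) (auto simp: finite_unif_bits)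

lemma fin_bool_pmf: "finite (set_pmf (p :: bool pmf))"
  by (rule finite_subset[of _ UNIV]) auto

lemma fin_finite_pmf: "finite (set_pmf (p :: 'z::finite pmf))"
  by (rule finite_subset[of _ UNIV]) auto

lemma fin_joint: "finite (set_pmf (joint_XZ L qX (W :: bool list \<Rightarrow> 'z::finite pmf)))"
  unfolding joint_XZ_def by (auto intro!: finite_seq_pmf fin_bool_pmf fin_finite_pmf)

lemma fin_XZX: "finite (set_pmf (XZX L qX (W :: bool list \<Rightarrow> 'z::finite pmf) j))"
  unfolding XZX_def by (auto intro: finite_imageI fin_joint)

lemma dstar_pos: "L \<ge> 2 \<Longrightarrow> N \<ge> 1 \<Longrightarrow> delta_star_L L N > 0"
proof -
  assume L: "L \<ge> 2" and N: "N \<ge> 1"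
  have "log 2 (real N) \<ge> 0" using N by simp
  moreover have "real L \<ge> 2" using L by simp
  ultimately have "real L + log 2 (real N) > 0" by linarith
  then have "2 / real N * (real L + log 2 (real N)) > 0" using N by (intro mult_pos_pos) auto
  moreover have "log 2 (2 ^ L + 3) > 0"
  proof -
    have "(1::real) < 2 ^ L + 3" by (smt (verit) zero_less_power)
    then show ?thesis by (subst zero_less_log_cancel_iff) auto
  qed
  ultimately show ?thesis by (simp add: delta_star_L_def)
qed

lemma dstar_big:
  assumes L: "L \<ge> 2" and N: "N \<ge> 1"
  shows "ln (real N) \<le> real N * (delta_star_L L N * ln 2)\<^sup>2 / 4"
proof -
  define a where "a = log 2 (2 ^ L + 3) * ln (2::real)"
  have a_ln: "a = ln (2 ^ L + 3 :: real)" by (simp add: a_def log_def)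
  have lg: "log 2 (real N) \<ge> 0" using N by simp
  have l2: "ln (2::real) \<ge> 2/3" by (rule ln2_ge_two_thirds)
  have "a \<ge> ln 4"
  proof -
    have "(2::real) ^ L \<ge> 2 ^ 2" using L by (intro power_increasing) auto
    then show ?thesis unfolding a_ln by (subst ln_le_cancel_iff) auto
  qed
  moreover have "ln (4::real) = 2 * ln 2"
    using ln_realpow[of 2 2] by simp
  ultimately have a1: "a \<ge> 2 * ln 2" by simp
  then have a0: "a \<ge> 1" using l2 by simp
  have "(delta_star_L L N * ln 2)\<^sup>2 = a\<^sup>2 * (2 / real N * (real L + log 2 (real N)))"
  proof -
    have e1: "delta_star_L L N * ln 2 = a * sqrt (2 / real N * (real L + log 2 (real N)))"
      by (simp add: delta_star_L_def a_def mult_ac)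
    have "(sqrt (2 / real N * (real L + log 2 (real N))))\<^sup>2 = 2 / real N * (real L + log 2 (real N))"
      using lg by (intro real_sqrt_pow2) auto
    then show ?thesis unfolding e1 power_mult_distrib by simp
  qed
  then have "real N * (delta_star_L L N * ln 2)\<^sup>2 / 4 = a\<^sup>2 * (real L + log 2 (real N)) / 2"
    using N by (simp add: field_simps)
  also have "\<dots> \<ge> (2 * ln 2) * (real L + log 2 (real N)) / 2"
  proof -
    have "a * 1 \<le> a * a" using a0 by (intro mult_left_mono) auto
    then have "a \<le> a * a" by simp
    then have "a\<^sup>2 \<ge> 2 * ln 2" unfolding power2_eq_square using a1 by linarith
    then show ?thesis using lg by (intro divide_right_mono mult_right_mono) auto
  qed
  also have "(2 * ln 2) * (real L + log 2 (real N)) / 2 \<ge> ln (real N)"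
  proof -
    have "ln (real N) = ln 2 * log 2 (real N)" using N by (simp add: log_def)
    then show ?thesis using l2 by (simp add: algebra_simps)
  qed
  finally show ?thesis .
qed

lemma inj_split_list: "inj (\<lambda>ws. (map fst ws, map snd ws))"
  by (rule injI) (metis zip_map_fst_snd prod.inject)

lemma fin_hyb:
  fixes W :: "bool list \<Rightarrow> 'z::finite pmf"
  assumes "\<And>l. l < L \<Longrightarrow> finite (Hf l) \<and> Hf l \<noteq> {}"
  shows "finite (set_pmf (hyb L qX W Hf r N j))"
  unfolding hyb_def using assms fin_Pg[of L Hf] fin_Useq[of L r] finite_iid[OF fin_joint, of L qX W N]
  by auto

lemma hyb_step:
  fixes W :: "bool list \<Rightarrow> 'z::finite pmf"
  assumes j: "j < L" and L: "L \<ge> 2" and N: "N \<ge> 1"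
    and rj: "real (r j) = real N * (cond_entropy_pmf (XZX L qX W j) - eps2 L N \<xi> / 2)"
    and tu: "\<And>l. l < L \<Longrightarrow> two_universal N (r l) (Hf l)"
  shows "vdist (hyb L qX W Hf r N (Suc j)) (hyb L qX W Hf r N j) \<le> 2 / real N + 2 powr (- real N * \<xi> / 2)"
proof -
  define Q where "Q = joint_XZ L qX W"
  define XZj where "XZj = XZX L qX W j"
  define I where "I = iid XZj N"
  define \<phi> where "\<phi> = (\<lambda>ws::(bool \<times> 'z \<times> bool list) list. (map fst ws, map snd ws))"
  define J where "J = map_pmf \<phi> I"
  define Hj where "Hj = pmf_of_set (Hf j)"
  define Hc where "Hc = cond_entropy_pmf XZj"
  define ds where "ds = delta_star_L L N"
  define \<theta> where "\<theta> = 2 powr (- (real N * (Hc - ds)))"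
  define RealJ where "RealJ = bind_pmf J (\<lambda>w. map_pmf (\<lambda>h. (h, h (fst w), snd w)) Hj)"
  define IdealJ where "IdealJ = bind_pmf J (\<lambda>w. bind_pmf Hj (\<lambda>h. map_pmf (\<lambda>u. (h, u, snd w)) (unif_bits (r j))))"
  have fHf: "finite (Hf l) \<and> Hf l \<noteq> {}" if "l < L" for l using tu[OF that] by (simp add: two_universal_def)
  have tuj: "two_universal N (r j) (Hf j)" using tu[OF j] .
  have fXZj: "finite (set_pmf XZj)" unfolding XZj_def by (rule fin_XZX)
  have fI: "finite (set_pmf I)" unfolding I_def by (rule finite_iid[OF fXZj])
  have fJ: "finite (set_pmf J)" using fI by (simp add: J_def)
  have fHj: "finite (set_pmf Hj)" using fHf[OF j] by (simp add: Hj_def)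
  have fRJ: "finite (set_pmf RealJ)" using fJ fHj by (simp add: RealJ_def)
  have fIJ: "finite (set_pmf IdealJ)" using fJ fHj by (simp add: IdealJ_def finite_unif_bits)
  have Jeq: "map_pmf (\<lambda>D. (xD j D, yD j D)) (iid Q N) = J"
  proof -
    have "XZj = map_pmf (\<lambda>w. (fst w ! j, (snd w, take j (fst w)))) Q"
      unfolding XZj_def XZX_def Q_def by (rule map_pmf_cong) (auto simp: case_prod_beta)
    then have "J = map_pmf (\<lambda>D. \<phi> (map (\<lambda>w. (fst w ! j, (snd w, take j (fst w)))) D)) (iid Q N)"
      by (simp add: J_def I_def iid_map map_pmf_comp)
    also have "\<dots> = map_pmf (\<lambda>D. (xD j D, yD j D)) (iid Q N)"
      by (simp add: \<phi>_def xD_def yD_def comp_def)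
    finally show ?thesis by simp
  qed
  have eqR: "hyb L qX W Hf r N (Suc j) = bind_pmf (Pg L Hf) (\<lambda>Gr. bind_pmf (Useq L r) (\<lambda>Ur. map_pmf (Fj L j Gr Ur) RealJ))"
    unfolding hyb_real[OF j] Jeq[unfolded Q_def] RealJ_def Hj_def ..
  have eqI: "hyb L qX W Hf r N j = bind_pmf (Pg L Hf) (\<lambda>Gr. bind_pmf (Useq L r) (\<lambda>Ur. map_pmf (Fj L j Gr Ur) IdealJ))"
    unfolding hyb_ideal[OF j] Jeq[unfolded Q_def] IdealJ_def Hj_def ..
  have V1: "vdist (hyb L qX W Hf r N (Suc j)) (hyb L qX W Hf r N j) \<le> vdist RealJ IdealJ"
    unfolding eqR eqI
  proof (rule vdist_bind_right)
    show "finite (set_pmf (Pg L Hf))" using fHf by (intro fin_Pg) auto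
    fix Gr
    show "finite (set_pmf (bind_pmf (Useq L r) (\<lambda>Ur. map_pmf (Fj L j Gr Ur) RealJ))) \<and>
          finite (set_pmf (bind_pmf (Useq L r) (\<lambda>Ur. map_pmf (Fj L j Gr Ur) IdealJ)))"
      using fin_Useq[of L r] fRJ fIJ by simp
    show "vdist (bind_pmf (Useq L r) (\<lambda>Ur. map_pmf (Fj L j Gr Ur) RealJ)) (bind_pmf (Useq L r) (\<lambda>Ur. map_pmf (Fj L j Gr Ur) IdealJ))
          \<le> vdist RealJ IdealJ"
    proof (rule vdist_bind_right)
      show "finite (set_pmf (Useq L r))" by (rule fin_Useq)
      fix Ur
      show "finite (set_pmf (map_pmf (Fj L j Gr Ur) RealJ)) \<and> finite (set_pmf (map_pmf (Fj L j Gr Ur) IdealJ))"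
        using fRJ fIJ by simp
      show "vdist (map_pmf (Fj L j Gr Ur) RealJ) (map_pmf (Fj L j Gr Ur) IdealJ) \<le> vdist RealJ IdealJ"
        using fRJ fIJ by (rule vdist_map)
    qed
  qed
  define S where "S = {w. pmf J w > \<theta> * pmf (map_pmf snd J) (snd w)}"
  have V2: "vdist RealJ IdealJ \<le> 2 * measure_pmf.prob J S + sqrt (2 ^ r j * \<theta>)"
    unfolding RealJ_def IdealJ_def Hj_def
  proof (rule lhl_pmf[OF fJ _ tuj])
    show "\<And>w. w \<in> set_pmf J \<Longrightarrow> length (fst w) = N"
      using set_iid_length[of _ XZj N] by (auto simp: J_def I_def \<phi>_def)
    show "0 \<le> \<theta>" by (simp add: \<theta>_def)
    show "\<And>w. w \<in> set_pmf J \<Longrightarrow> w \<notin> S \<Longrightarrow> pmf J w \<le> \<theta> * pmf (map_pmf snd J) (snd w)"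
      by (auto simp: S_def not_less)
  qed
  have V3: "measure_pmf.prob J S \<le> 1 / real N"
  proof -
    define B where "B = {ws. prod_list (map (pmf XZj) ws) >
           2 powr (- (real N * (cond_entropy_pmf XZj - ds))) * prod_list (map (pmf (map_pmf snd XZj)) (map snd ws))}"
    have "measure_pmf.prob J S = measure_pmf.prob I (\<phi> -` S)" by (simp add: J_def measure_map_pmf)
    also have "\<dots> = measure_pmf.prob I (\<phi> -` S \<inter> set_pmf I)" by (simp add: measure_Int_set_pmf)
    also have "\<dots> \<le> measure_pmf.prob I B"
    proof (intro measure_pmf.finite_measure_mono)
      show "\<phi> -` S \<inter> set_pmf I \<subseteq> B"
      proof
        fix ws assume ws: "ws \<in> \<phi> -` S \<inter> set_pmf I"
        have len: "length ws = N" using ws set_iid_length[of ws XZj N] by (auto simp: I_def)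
        have p1: "pmf J (map fst ws, map snd ws) = prod_list (map (pmf XZj) ws)"
          using pmf_map_inj'[OF inj_split_list, of I ws] len by (simp add: J_def \<phi>_def I_def pmf_iid)
        have mJ: "map_pmf snd J = iid (map_pmf snd XZj) N"
          by (simp add: J_def I_def map_pmf_comp \<phi>_def iid_map)
        have "pmf J (\<phi> ws) > \<theta> * pmf (map_pmf snd J) (snd (\<phi> ws))" using ws by (auto simp: S_def)
        then show "ws \<in> B" using len
          by (simp add: p1 mJ pmf_iid \<phi>_def B_def \<theta>_def Hc_def)
      qed
    qed auto
    also have "\<dots> \<le> 1 / real N"
      unfolding B_def I_def
      by (rule aep[OF fXZj N]) (use dstar_pos[OF L N] dstar_big[OF L N] in \<open>simp_all add: ds_def\<close>)
    finally show ?thesis .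
  qed
  have V4: "sqrt (2 ^ r j * \<theta>) = 2 powr (- real N * \<xi> / 2)"
  proof -
    have "(2::real) ^ r j * \<theta> = 2 powr (real (r j) - real N * (Hc - ds))"
      by (simp add: \<theta>_def powr_realpow[symmetric] powr_add[symmetric])
    also have "real (r j) - real N * (Hc - ds) = - real N * \<xi>"
      using rj by (simp add: Hc_def XZj_def ds_def eps2_def algebra_simps add_divide_distrib)
    finally have "(2::real) ^ r j * \<theta> = 2 powr (- real N * \<xi>)" .
    moreover have "(2::real) powr (- real N * \<xi> / 2) = sqrt (2 powr (- real N * \<xi>))"
      by (rule powr_half_sqrt_powr) simp
    ultimately show ?thesis by simp
  qed
  show ?thesis using V1 V2 V3 V4 by linarith
qed

lemma hyb_total:
  fixes W :: "bool list \<Rightarrow> 'z::finite pmf"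
  assumes L: "L \<ge> 2" and N: "N \<ge> 1"
    and r: "\<And>l. l < L \<Longrightarrow> real (r l) = real N * (cond_entropy_pmf (XZX L qX W l) - eps2 L N \<xi> / 2)"
    and tu: "\<And>l. l < L \<Longrightarrow> two_universal N (r l) (Hf l)"
  shows "vdist (hyb L qX W Hf r N L) (hyb L qX W Hf r N 0) \<le> real L * (2 / real N + 2 powr (- real N * \<xi> / 2))"
proof -
  have fHf: "finite (Hf l) \<and> Hf l \<noteq> {}" if "l < L" for l using tu[OF that] by (simp add: two_universal_def)
  define b where "b = 2 / real N + 2 powr (- real N * \<xi> / 2)"
  have "j \<le> L \<Longrightarrow> vdist (hyb L qX W Hf r N j) (hyb L qX W Hf r N 0) \<le> real j * b" for j
  proof (induction j)
    case 0 then show ?case by simp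
  next
    case (Suc j)
    then have j: "j < L" by simp
    have "vdist (hyb L qX W Hf r N (Suc j)) (hyb L qX W Hf r N 0)
        \<le> vdist (hyb L qX W Hf r N (Suc j)) (hyb L qX W Hf r N j) + vdist (hyb L qX W Hf r N j) (hyb L qX W Hf r N 0)"
      using fHf by (intro vdist_triangle fin_hyb) auto
    also have "\<dots> \<le> b + real j * b"
      using hyb_step[where W=W and j=j and L=L and N=N and r=r and qX=qX and \<xi>=\<xi> and Hf=Hf, OF j L N r[OF j] tu] Suc j
      unfolding b_def by (intro add_mono) auto
    finally have "vdist (hyb L qX W Hf r N (Suc j)) (hyb L qX W Hf r N 0) \<le> b + real j * b" .
    moreover have "real (Suc j) * b = b + real j * b" by (simp add: algebra_simps)
    ultimately show ?case by linarith
  qed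
  then show ?thesis by (simp add: b_def)
qed

definition Xi :: "nat \<Rightarrow> (nat \<Rightarrow> bool pmf) \<Rightarrow> nat \<Rightarrow> bool list list pmf" where
  "Xi L qX N = seq_pmf (map (\<lambda>l. iid (qX l) N) [0..<L])"

definition hashes :: "nat \<Rightarrow> (bool list \<Rightarrow> bool list) list \<Rightarrow> bool list list \<Rightarrow> bool list list" where
  "hashes L G X = map (\<lambda>l. (G ! l) (X ! l)) [0..<L]"

lemma Xi_chan:
  "bind_pmf (Xi L qX N) (\<lambda>X. map_pmf (\<lambda>Z. (X, Z)) (chanN W N X)) = map_pmf (\<lambda>D. (cols L D, map snd D)) (iid (joint_XZ L qX W) N)"
proof -
  have "bind_pmf (Xi L qX N) (\<lambda>X. map_pmf (\<lambda>Z. (X, Z)) (chanN W N X))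
      = bind_pmf (seq_pmf (map (\<lambda>p. iid p N) (map qX [0..<L]))) (\<lambda>X. map_pmf (\<lambda>Z. (X, Z)) (chanN W N X))"
    by (simp add: Xi_def comp_def)
  also have "\<dots> = map_pmf (\<lambda>D. (cols (length (map qX [0..<L])) D, map snd D))
      (iid (bind_pmf (seq_pmf (map qX [0..<L])) (\<lambda>xs. map_pmf (\<lambda>z. (xs, z)) (W xs))) N)"
    by (rule transp)
  finally show ?thesis by (simp add: joint_XZ_def)
qed

lemma hyb_L:
  "hyb L qX W Hf r N L = bind_pmf (Pg L Hf) (\<lambda>G. bind_pmf (Xi L qX N) (\<lambda>X. map_pmf (\<lambda>Z. (G, Z, hashes L G X)) (chanN W N X)))"
proof -
  have "bind_pmf (Pg L Hf) (\<lambda>G. bind_pmf (Xi L qX N) (\<lambda>X. map_pmf (\<lambda>Z. (G, Z, hashes L G X)) (chanN W N X)))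
      = bind_pmf (Pg L Hf) (\<lambda>G. map_pmf (\<lambda>(X, Z). (G, Z, hashes L G X)) (bind_pmf (Xi L qX N) (\<lambda>X. map_pmf (\<lambda>Z. (X, Z)) (chanN W N X))))"
    by (simp add: map_bind_pmf map_pmf_comp)
  also have "\<dots> = bind_pmf (Pg L Hf) (\<lambda>G. map_pmf (\<lambda>D. (G, map snd D, hashes L G (cols L D))) (iid (joint_XZ L qX W) N))"
    by (simp add: Xi_chan map_pmf_comp)
  also have "\<dots> = hyb L qX W Hf r N L"
  proof -
    have mc: "map (\<lambda>l. if l < L then (G ! l) (cols L D ! l) else Us ! l) [0..<L] = hashes L G (cols L D)" for G D and Us :: "bool list list"
      unfolding hashes_def by (intro map_cong) auto
    show ?thesis unfolding hyb_def mc by (simp add: map_pmf_def[symmetric])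
  qed
  finally show ?thesis by simp
qed

lemma hyb_0:
  "hyb L qX W Hf r N 0 = bind_pmf (Pg L Hf) (\<lambda>G. bind_pmf (Xi L qX N) (\<lambda>X. bind_pmf (chanN W N X) (\<lambda>Z. map_pmf (\<lambda>Us. (G, Z, Us)) (Useq L r))))"
proof -
  have "bind_pmf (Pg L Hf) (\<lambda>G. bind_pmf (Xi L qX N) (\<lambda>X. bind_pmf (chanN W N X) (\<lambda>Z. map_pmf (\<lambda>Us. (G, Z, Us)) (Useq L r))))
      = bind_pmf (Pg L Hf) (\<lambda>G. bind_pmf (bind_pmf (Xi L qX N) (\<lambda>X. map_pmf (\<lambda>Z. (X, Z)) (chanN W N X))) (\<lambda>w. map_pmf (\<lambda>Us. (G, snd w, Us)) (Useq L r)))"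
    by (simp add: bind_assoc_pmf bind_map_pmf)
  also have "\<dots> = bind_pmf (Pg L Hf) (\<lambda>G. bind_pmf (iid (joint_XZ L qX W) N) (\<lambda>D. map_pmf (\<lambda>Us. (G, map snd D, Us)) (Useq L r)))"
    by (simp add: Xi_chan bind_map_pmf)
  also have "\<dots> = hyb L qX W Hf r N 0"
    unfolding hyb_def
  proof (intro bind_pmf_cong refl map_pmf_cong)
    fix Us assume "Us \<in> set_pmf (Useq L r)"
    then have "length Us = L" unfolding Useq_def by (auto dest: seq_pmf_length)
    then show "(G, map snd D, Us) = (G, map snd D, map (\<lambda>l. if l < 0 then (G ! l) (cols L D ! l) else Us ! l) [0..<L])" for G D
      by (auto intro: nth_equalityI)
  qed
  finally show ?thesis by simp
qed

lemma fin_chanN: "finite (set_pmf (chanN (W :: bool list \<Rightarrow> 'z::finite pmf) N X))"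
  unfolding chanN_def by (intro finite_seq_pmf) (auto intro: fin_finite_pmf)

lemma fin_first_block: "finite (set_pmf (first_block L e a))"
  unfolding first_block_def by (intro finite_seq_pmf) (auto simp: finite_unif_bits)

lemma fin_Xi: "finite (set_pmf (Xi L qX N))"
  unfolding Xi_def by (intro finite_seq_pmf) (auto intro: finite_iid fin_bool_pmf)

lemma vdist_B_Xi:
  assumes "\<And>l. l < L \<Longrightarrow> vdist (map_pmf (e l) (unif_bits (a l))) (iid (qX l) N) \<le> \<delta>"
  shows "vdist (first_block L e a) (Xi L qX N) \<le> real L * \<delta>"
proof -
  define ps where "ps = map (\<lambda>l. map_pmf (e l) (unif_bits (a l))) [0..<L]"
  define qs where "qs = map (\<lambda>l. iid (qX l) N) [0..<L]"
  have "vdist (first_block L e a) (Xi L qX N) = vdist (seq_pmf ps) (seq_pmf qs)"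
    by (simp add: first_block_def Xi_def ps_def qs_def)
  also have "\<dots> \<le> (\<Sum>i<length ps. vdist (ps ! i) (qs ! i))"
    by (rule vdist_seq) (auto simp: ps_def qs_def finite_unif_bits intro: finite_iid fin_bool_pmf)
  also have "length ps = L" by (simp add: ps_def)
  also have "(\<Sum>i<L. vdist (ps ! i) (qs ! i)) \<le> (\<Sum>i<L. \<delta>)" using assms by (intro sum_mono) (auto simp: ps_def qs_def)
  finally show ?thesis by simp
qed

definition Eseq :: "nat \<Rightarrow> (nat \<Rightarrow> nat) \<Rightarrow> bool list list pmf" where
  "Eseq L m = seq_pmf (map (\<lambda>l. unif_bits (m l)) [0..<L])"

definition mk :: "nat \<Rightarrow> (nat \<Rightarrow> bool list \<Rightarrow> bool list) \<Rightarrow> bool list list \<Rightarrow> bool list list \<Rightarrow> bool list list" where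
  "mk L e Hs Es = map (\<lambda>(l, u, v). e l (u @ v)) (zip [0..<L] (zip Hs Es))"

lemma fin_Eseq: "finite (set_pmf (Eseq L m))"
  unfolding Eseq_def by (intro finite_seq_pmf) (auto simp: finite_unif_bits)

lemma unif_append: "unif_bits (r + m) = bind_pmf (unif_bits r) (\<lambda>u. map_pmf (\<lambda>v. u @ v) (unif_bits m))"
proof (rule pmf_eqI)
  fix s :: "bool list"
  have inner: "pmf (map_pmf (\<lambda>v. u @ v) (unif_bits m)) s = (if u = take r s \<and> length s = r + m then 1 / 2 ^ m else 0)"
    if u: "length u = r" for u
  proof (cases "u = take r s \<and> length s = r + m")
    case True
    then have s: "s = u @ drop r s" by (metis append_take_drop_id)
    have "pmf (map_pmf (\<lambda>v. u @ v) (unif_bits m)) (u @ drop r s) = pmf (unif_bits m) (drop r s)"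
      by (rule pmf_map_inj') (auto simp: inj_on_def)
    then show ?thesis using True s by (simp add: pmf_unif_bits)
  next
    case False
    have "s \<notin> set_pmf (map_pmf (\<lambda>v. u @ v) (unif_bits m))" using False u by (auto simp: set_unif_bits)
    then have z: "pmf (map_pmf (\<lambda>v. u @ v) (unif_bits m)) s = 0" by (rule pmf_eq_0_set_pmf[THEN iffD2])
    show ?thesis by (simp only: if_not_P[OF False] z)
  qed
  have "pmf (bind_pmf (unif_bits r) (\<lambda>u. map_pmf (\<lambda>v. u @ v) (unif_bits m))) s
      = (\<Sum>u\<in>{u. length u = r}. pmf (unif_bits r) u * pmf (map_pmf (\<lambda>v. u @ v) (unif_bits m)) s)"
    by (rule pmf_bind_finite) (auto simp: finite_bits set_unif_bits)
  also have "\<dots> = (\<Sum>u\<in>{u. length u = r}. if u = take r s then (if length s = r + m then 1 / 2 ^ r * (1 / 2 ^ m) else 0) else 0)"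
    by (intro sum.cong refl) (auto simp: inner pmf_unif_bits)
  also have "\<dots> = (if length s = r + m then 1 / 2 ^ r * (1 / 2 ^ m) else 0)"
    by (simp add: sum.delta finite_bits)
  also have "\<dots> = pmf (unif_bits (r + m)) s" by (simp add: pmf_unif_bits power_add)
  finally show "pmf (unif_bits (r + m)) s = pmf (bind_pmf (unif_bits r) (\<lambda>u. map_pmf (\<lambda>v. u @ v) (unif_bits m))) s" ..
qed

lemma map2_mk: "map2 (\<lambda>l E. e l (h l @ E)) ls Es = map (\<lambda>(l, u, v). e l (u @ v)) (zip ls (zip (map h ls) Es))"
  by (induction ls arbitrary: Es) (auto simp: zip_Cons1 split: list.split)

lemma next_block_eq: "next_block L e m G X = map_pmf (mk L e (hashes L G X)) (Eseq L m)"
proof -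
  have "next_block L e m G X = map_pmf (\<lambda>Es. map2 (\<lambda>l E. e l ((G ! l) (X ! l) @ E)) [0..<L] Es) (Eseq L m)"
    unfolding next_block_def Eseq_def by (rule seq_pmf_map_map)
  also have "\<dots> = map_pmf (mk L e (hashes L G X)) (Eseq L m)"
    by (intro map_pmf_cong refl) (simp add: mk_def hashes_def map2_mk[of e "\<lambda>l. (G ! l) (X ! l)"])
  finally show ?thesis .
qed

lemma first_block_eq:
  assumes "\<And>l. l < L \<Longrightarrow> a l = r l + m l"
  shows "first_block L e a = bind_pmf (Useq L r) (\<lambda>Us. map_pmf (mk L e Us) (Eseq L m))"
proof -
  have "first_block L e a = seq_pmf (map (\<lambda>l. bind_pmf (unif_bits (r l)) (\<lambda>u. map_pmf (\<lambda>v. e l (u @ v)) (unif_bits (m l)))) [0..<L])"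
    unfolding first_block_def
  proof (intro arg_cong[where f=seq_pmf] map_cong refl)
    fix l assume "l \<in> set [0..<L]"
    then have "a l = r l + m l" using assms by simp
    then show "map_pmf (e l) (unif_bits (a l)) = bind_pmf (unif_bits (r l)) (\<lambda>u. map_pmf (\<lambda>v. e l (u @ v)) (unif_bits (m l)))"
      by (simp add: unif_append map_bind_pmf map_pmf_comp)
  qed
  also have "\<dots> = bind_pmf (Useq L r) (\<lambda>Us. map_pmf (mk L e Us) (Eseq L m))"
    unfolding Useq_def Eseq_def mk_def by (rule seq_pmf_bind_indep)
  finally show ?thesis .
qed

lemma T_bound:
  fixes W :: "bool list \<Rightarrow> 'z::finite pmf"
  assumes L: "L \<ge> 2" and N: "N \<ge> 1"
    and r: "\<And>l. l < L \<Longrightarrow> real (r l) = real N * (cond_entropy_pmf (XZX L qX W l) - eps2 L N \<xi> / 2)"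
    and tu: "\<And>l. l < L \<Longrightarrow> two_universal N (r l) (Hf l)"
    and enc: "\<And>l. l < L \<Longrightarrow> vdist (map_pmf (e l) (unif_bits (a l))) (iid (qX l) N) \<le> \<delta>"
  shows "vdist (bind_pmf (Pg L Hf) (\<lambda>G. bind_pmf (first_block L e a) (\<lambda>X. map_pmf (\<lambda>Z. (G, Z, hashes L G X)) (chanN W N X))))
               (bind_pmf (Pg L Hf) (\<lambda>G. bind_pmf (first_block L e a) (\<lambda>X. bind_pmf (chanN W N X) (\<lambda>Z. map_pmf (\<lambda>Us. (G, Z, Us)) (Useq L r)))))
         \<le> 2 * (real L * \<delta>) + real L * (2 / real N + 2 powr (- real N * \<xi> / 2))"
proof -
  define B where "B = first_block L e a"
  define X0 where "X0 = Xi L qX N"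
  define Kr where "Kr X = bind_pmf (Pg L Hf) (\<lambda>G. map_pmf (\<lambda>Z. (G, Z, hashes L G X)) (chanN W N X))" for X
  define Ki where "Ki X = bind_pmf (Pg L Hf) (\<lambda>G. bind_pmf (chanN W N X) (\<lambda>Z. map_pmf (\<lambda>Us. (G, Z, Us)) (Useq L r)))" for X
  have fHf: "finite (Hf l) \<and> Hf l \<noteq> {}" if "l < L" for l using tu[OF that] by (simp add: two_universal_def)
  have fPg: "finite (set_pmf (Pg L Hf))" using fHf by (intro fin_Pg) auto
  have fKr: "finite (set_pmf (Kr X))" for X using fPg fin_chanN[of W N X] by (simp add: Kr_def)
  have fKi: "finite (set_pmf (Ki X))" for X using fPg fin_chanN[of W N X] fin_Useq[of L r] by (simp add: Ki_def)
  have fB: "finite (set_pmf B)" by (simp add: B_def fin_first_block)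
  have fX0: "finite (set_pmf X0)" by (simp add: X0_def fin_Xi)
  have fbind: "finite (set_pmf (bind_pmf M K))" if "finite (set_pmf M)" "\<And>x. finite (set_pmf (K x))" for M :: "bool list list pmf" and K :: "bool list list \<Rightarrow> ((bool list \<Rightarrow> bool list) list \<times> 'z list \<times> bool list list) pmf"
    using that by simp
  have eR: "bind_pmf (Pg L Hf) (\<lambda>G. bind_pmf B (\<lambda>X. map_pmf (\<lambda>Z. (G, Z, hashes L G X)) (chanN W N X))) = bind_pmf B Kr"
    unfolding Kr_def by (rule bind_commute_pmf)
  have eI: "bind_pmf (Pg L Hf) (\<lambda>G. bind_pmf B (\<lambda>X. bind_pmf (chanN W N X) (\<lambda>Z. map_pmf (\<lambda>Us. (G, Z, Us)) (Useq L r)))) = bind_pmf B Ki"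
    unfolding Ki_def by (rule bind_commute_pmf)
  have hL: "bind_pmf X0 Kr = hyb L qX W Hf r N L"
    unfolding hyb_L Kr_def X0_def by (rule bind_commute_pmf)
  have h0: "bind_pmf X0 Ki = hyb L qX W Hf r N 0"
    unfolding hyb_0 Ki_def X0_def by (rule bind_commute_pmf)
  have vBX: "vdist B X0 \<le> real L * \<delta>" unfolding B_def X0_def by (rule vdist_B_Xi[OF enc])
  have a1: "vdist (bind_pmf B Kr) (bind_pmf B Ki) \<le> vdist (bind_pmf B Kr) (bind_pmf X0 Kr) + vdist (bind_pmf X0 Kr) (bind_pmf B Ki)"
    by (intro vdist_triangle fbind fB fX0 fKr fKi)
  have a2: "vdist (bind_pmf X0 Kr) (bind_pmf B Ki) \<le> vdist (bind_pmf X0 Kr) (bind_pmf X0 Ki) + vdist (bind_pmf X0 Ki) (bind_pmf B Ki)"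
    by (intro vdist_triangle fbind fB fX0 fKr fKi)
  have a3: "vdist (bind_pmf B Kr) (bind_pmf X0 Kr) \<le> vdist B X0"
    by (intro vdist_bind_left fB fX0 fKr)
  have a4: "vdist (bind_pmf X0 Ki) (bind_pmf B Ki) \<le> vdist X0 B"
    by (intro vdist_bind_left fB fX0 fKi)
  have a5: "vdist (bind_pmf X0 Kr) (bind_pmf X0 Ki) \<le> real L * (2 / real N + 2 powr (- real N * \<xi> / 2))"
    unfolding hL h0 by (rule hyb_total[OF L N r tu])
  have X: "vdist (bind_pmf B Kr) (bind_pmf B Ki) \<le> vdist B X0 + (real L * (2 / real N + 2 powr (- real N * \<xi> / 2)) + vdist X0 B)"
    using a1 a2 a3 a4 a5 by linarith
  show ?thesis unfolding B_def[symmetric] eR eI using X vBX vdist_sym[of X0 B] by linarith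
qed

lemma TL:
  fixes W :: "bool list \<Rightarrow> 'z::finite pmf" and \<Phi> :: "(bool list \<Rightarrow> bool list) list \<Rightarrow> 'z list \<Rightarrow> bool list list \<Rightarrow> 'b pmf"
  assumes L: "L \<ge> 2" and N: "N \<ge> 1"
    and r: "\<And>l. l < L \<Longrightarrow> real (r l) = real N * (cond_entropy_pmf (XZX L qX W l) - eps2 L N \<xi> / 2)"
    and tu: "\<And>l. l < L \<Longrightarrow> two_universal N (r l) (Hf l)"
    and enc: "\<And>l. l < L \<Longrightarrow> vdist (map_pmf (e l) (unif_bits (a l))) (iid (qX l) N) \<le> \<delta>"
    and arm: "\<And>l. l < L \<Longrightarrow> a l = r l + m l"
    and fPhi: "\<And>G Z X. finite (set_pmf (\<Phi> G Z X))"
  shows "vdist (bind_pmf (Pg L Hf) (\<lambda>G. bind_pmf (first_block L e a) (\<lambda>X. bind_pmf (chanN W N X) (\<lambda>Z.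
                   bind_pmf (next_block L e m G X) (\<lambda>X'. \<Phi> G Z X')))))
               (bind_pmf (Pg L Hf) (\<lambda>G. bind_pmf (first_block L e a) (\<lambda>X. bind_pmf (chanN W N X) (\<lambda>Z.
                   bind_pmf (first_block L e a) (\<lambda>X'. \<Phi> G Z X')))))
         \<le> 2 * (real L * \<delta>) + real L * (2 / real N + 2 powr (- real N * \<xi> / 2))"
proof -
  define B where "B = first_block L e a"
  define \<Psi> where "\<Psi> = (\<lambda>(G, Z, Hs). bind_pmf (Eseq L m) (\<lambda>Es. \<Phi> G Z (mk L e Hs Es)))"
  define TR where "TR = bind_pmf (Pg L Hf) (\<lambda>G. bind_pmf B (\<lambda>X. map_pmf (\<lambda>Z. (G, Z, hashes L G X)) (chanN W N X)))"
  define TI where "TI = bind_pmf (Pg L Hf) (\<lambda>G. bind_pmf B (\<lambda>X. bind_pmf (chanN W N X) (\<lambda>Z. map_pmf (\<lambda>Us. (G, Z, Us)) (Useq L r))))"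
  have fHf: "finite (Hf l) \<and> Hf l \<noteq> {}" if "l < L" for l using tu[OF that] by (simp add: two_universal_def)
  have fPg: "finite (set_pmf (Pg L Hf))" using fHf by (intro fin_Pg) auto
  have fTR: "finite (set_pmf TR)" using fPg fin_first_block[of L e a] fin_chanN[of W N]
    by (auto simp: TR_def B_def)
  have fTI: "finite (set_pmf TI)" using fPg fin_first_block[of L e a] fin_chanN[of W N] fin_Useq[of L r]
    by (auto simp: TI_def B_def)
  have fPsi: "finite (set_pmf (\<Psi> x))" for x
    using fin_Eseq[of L m] fPhi by (auto simp: \<Psi>_def split: prod.split)
  have e1: "bind_pmf (Pg L Hf) (\<lambda>G. bind_pmf B (\<lambda>X. bind_pmf (chanN W N X) (\<lambda>Z.
                   bind_pmf (next_block L e m G X) (\<lambda>X'. \<Phi> G Z X')))) = bind_pmf TR \<Psi>"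
    by (simp add: TR_def next_block_eq bind_assoc_pmf bind_map_pmf \<Psi>_def)
  have e2: "bind_pmf (Pg L Hf) (\<lambda>G. bind_pmf B (\<lambda>X. bind_pmf (chanN W N X) (\<lambda>Z.
                   bind_pmf B (\<lambda>X'. \<Phi> G Z X')))) = bind_pmf TI \<Psi>"
  proof -
    have fbe: "B = bind_pmf (Useq L r) (\<lambda>Us. map_pmf (mk L e Us) (Eseq L m))"
      unfolding B_def by (rule first_block_eq[OF arm])
    have "bind_pmf B (\<lambda>X'. \<Phi> G Z X') = bind_pmf (Useq L r) (\<lambda>Us. \<Psi> (G, Z, Us))" for G Z
      unfolding fbe by (simp add: bind_assoc_pmf bind_map_pmf \<Psi>_def)
    then show ?thesis by (simp add: TI_def bind_assoc_pmf bind_map_pmf)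
  qed
  have "vdist (bind_pmf TR \<Psi>) (bind_pmf TI \<Psi>) \<le> vdist TR TI"
    by (intro vdist_bind_left fTR fTI fPsi)
  also have "vdist TR TI \<le> 2 * (real L * \<delta>) + real L * (2 / real N + 2 powr (- real N * \<xi> / 2))"
    unfolding TR_def TI_def B_def by (rule T_bound[OF L N r tu enc])
  finally show ?thesis using e1 e2 by (simp add: B_def)
qed

definition Fb where
  "Fb L e m W N G n X = bind_pmf (chanN W N X) (\<lambda>Z. map_pmf (\<lambda>Zs. Z # Zs) (run_blocks L e m W N G n X))"

lemma fin_next_block: "finite (set_pmf (next_block L e m G X))"
  unfolding next_block_def by (intro finite_seq_pmf) (auto simp: finite_unif_bits)

lemma fin_run: "finite (set_pmf (run_blocks L e m (W :: bool list \<Rightarrow> 'z::finite pmf) N G n X))"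
proof (induction n arbitrary: X)
  case 0 then show ?case by simp
next
  case (Suc n)
  then show ?case using fin_next_block[of L e m G X] fin_chanN[of W N] by auto
qed

lemma fin_Fb: "finite (set_pmf (Fb L e m (W :: bool list \<Rightarrow> 'z::finite pmf) N G n X))"
  unfolding Fb_def using fin_chanN[of W N X] fin_run[of L e m W N G n] by auto

lemma main_induction:
  fixes W :: "bool list \<Rightarrow> 'z::finite pmf"
  assumes L: "L \<ge> 2" and N: "N \<ge> 1"
    and r: "\<And>l. l < L \<Longrightarrow> real (r l) = real N * (cond_entropy_pmf (XZX L qX W l) - eps2 L N \<xi> / 2)"
    and tu: "\<And>l. l < L \<Longrightarrow> two_universal N (r l) (Hf l)"
    and enc: "\<And>l. l < L \<Longrightarrow> vdist (map_pmf (e l) (unif_bits (a l))) (iid (qX l) N) \<le> \<delta>"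
    and arm: "\<And>l. l < L \<Longrightarrow> a l = r l + m l"
  defines "\<epsilon> \<equiv> 2 * (real L * \<delta>) + real L * (2 / real N + 2 powr (- real N * \<xi> / 2))"
  shows "vdist (bind_pmf (Pg L Hf) (\<lambda>G. bind_pmf (first_block L e a) (\<lambda>X. Fb L e m W N G n X)))
               (seq_pmf (replicate (Suc n) (bind_pmf (first_block L e a) (chanN W N)))) \<le> real n * \<epsilon>"
proof (induction n)
  case 0
  have "bind_pmf (Pg L Hf) (\<lambda>G. bind_pmf (first_block L e a) (\<lambda>X. Fb L e m W N G 0 X))
      = seq_pmf (replicate (Suc 0) (bind_pmf (first_block L e a) (chanN W N)))"
    by (simp add: Fb_def map_pmf_def[symmetric] map_bind_pmf bind_assoc_pmf bind_return_pmf)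
  then show ?case by simp
next
  case (Suc n)
  define B where "B = first_block L e a"
  define Q1 where "Q1 = bind_pmf B (chanN W N)"
  define Rn where "Rn = bind_pmf (Pg L Hf) (\<lambda>G. bind_pmf B (\<lambda>X. Fb L e m W N G n X))"
  define \<Phi> where "\<Phi> G Z X' = map_pmf (\<lambda>Zs. Z # Zs) (Fb L e m W N G n X')" for G Z X'
  have fHf: "finite (Hf l) \<and> Hf l \<noteq> {}" if "l < L" for l using tu[OF that] by (simp add: two_universal_def)
  have fPg: "finite (set_pmf (Pg L Hf))" using fHf by (intro fin_Pg) auto
  have fB: "finite (set_pmf B)" by (simp add: B_def fin_first_block)
  have fQ1: "finite (set_pmf Q1)" using fB fin_chanN[of W N] by (simp add: Q1_def)
  have fF: "\<And>G n X. finite (set_pmf (Fb L e m W N G n X))" by (rule fin_Fb)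
  have fPhi: "finite (set_pmf (\<Phi> G Z X'))" for G Z X' using fin_Fb[of L e m W N G n X'] by (simp add: \<Phi>_def)
  have fRn: "finite (set_pmf Rn)" using fPg fB fF by (simp add: Rn_def)
  have fI: "finite (set_pmf (seq_pmf (replicate k Q1)))" for k using fQ1 by (intro finite_seq_pmf) auto
  have eR: "bind_pmf (Pg L Hf) (\<lambda>G. bind_pmf B (\<lambda>X. Fb L e m W N G (Suc n) X))
          = bind_pmf (Pg L Hf) (\<lambda>G. bind_pmf B (\<lambda>X. bind_pmf (chanN W N X) (\<lambda>Z. bind_pmf (next_block L e m G X) (\<lambda>X'. \<Phi> G Z X'))))"
    by (simp add: Fb_def \<Phi>_def map_bind_pmf)
  define Mid where "Mid = bind_pmf (Pg L Hf) (\<lambda>G. bind_pmf B (\<lambda>X. bind_pmf (chanN W N X) (\<lambda>Z. bind_pmf B (\<lambda>X'. \<Phi> G Z X'))))"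
  have eM: "Mid = bind_pmf Q1 (\<lambda>Z. map_pmf (\<lambda>Zs. Z # Zs) Rn)"
  proof -
    have "Mid = bind_pmf (Pg L Hf) (\<lambda>G. bind_pmf Q1 (\<lambda>Z. map_pmf (\<lambda>Zs. Z # Zs) (bind_pmf B (\<lambda>X'. Fb L e m W N G n X'))))"
      by (simp add: Mid_def Q1_def bind_assoc_pmf \<Phi>_def map_bind_pmf)
    also have "\<dots> = bind_pmf Q1 (\<lambda>Z. bind_pmf (Pg L Hf) (\<lambda>G. map_pmf (\<lambda>Zs. Z # Zs) (bind_pmf B (\<lambda>X'. Fb L e m W N G n X'))))"
      by (rule bind_commute_pmf)
    also have "\<dots> = bind_pmf Q1 (\<lambda>Z. map_pmf (\<lambda>Zs. Z # Zs) Rn)"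
      by (simp add: Rn_def map_bind_pmf)
    finally show ?thesis .
  qed
  have step1: "vdist (bind_pmf (Pg L Hf) (\<lambda>G. bind_pmf B (\<lambda>X. Fb L e m W N G (Suc n) X))) Mid \<le> \<epsilon>"
    unfolding eR unfolding Mid_def B_def \<epsilon>_def by (rule TL[OF L N r tu enc arm fPhi])
  have step2: "vdist Mid (seq_pmf (replicate (Suc (Suc n)) Q1)) \<le> real n * \<epsilon>"
  proof -
    have "seq_pmf (replicate (Suc (Suc n)) Q1) = bind_pmf Q1 (\<lambda>Z. map_pmf (\<lambda>Zs. Z # Zs) (seq_pmf (replicate (Suc n) Q1)))"
      by simp
    then have "vdist Mid (seq_pmf (replicate (Suc (Suc n)) Q1)) \<le> vdist Rn (seq_pmf (replicate (Suc n) Q1))"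
      unfolding eM using fQ1 fRn fI by (auto intro!: vdist_bind_right vdist_map)
    also have "\<dots> \<le> real n * \<epsilon>" using Suc by (simp add: Rn_def B_def Q1_def)
    finally show ?thesis .
  qed
  have fL: "finite (set_pmf (bind_pmf (Pg L Hf) (\<lambda>G. bind_pmf B (\<lambda>X. Fb L e m W N G (Suc n) X))))"
    using fPg fB fF by simp
  have fM: "finite (set_pmf Mid)" unfolding eM using fQ1 fRn by simp
  have "vdist (bind_pmf (Pg L Hf) (\<lambda>G. bind_pmf B (\<lambda>X. Fb L e m W N G (Suc n) X))) (seq_pmf (replicate (Suc (Suc n)) Q1))
      \<le> \<epsilon> + real n * \<epsilon>"
    using vdist_triangle[OF fL fM fI[of "Suc (Suc n)"]] step1 step2 by linarith
  then show ?case by (simp add: B_def Q1_def algebra_simps)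
qed

lemma iid_concat: "map_pmf concat (seq_pmf (replicate k (iid q N))) = iid q (k * N)"
proof (induction k)
  case 0 then show ?case by (simp add: iid_0)
next
  case (Suc k)
  have "map_pmf concat (seq_pmf (replicate (Suc k) (iid q N)))
      = bind_pmf (iid q N) (\<lambda>x. map_pmf (\<lambda>ys. x @ ys) (map_pmf concat (seq_pmf (replicate k (iid q N)))))"
    by (simp add: map_bind_pmf map_pmf_comp)
  also have "\<dots> = bind_pmf (iid q N) (\<lambda>x. map_pmf (\<lambda>ys. x @ ys) (iid q (k * N)))" by (simp add: Suc)
  also have "\<dots> = seq_pmf (replicate N q @ replicate (k * N) q)"
    by (simp add: seq_pmf_append iid_def)
  also have "\<dots> = iid q (Suc k * N)" by (simp add: iid_def replicate_add)
  finally show ?case .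
qed

lemma chan_iid: "bind_pmf (Xi L qX N) (chanN W N) = iid (qZ L qX W) N"
proof -
  have "bind_pmf (Xi L qX N) (chanN W N) = map_pmf snd (bind_pmf (Xi L qX N) (\<lambda>X. map_pmf (\<lambda>Z. (X, Z)) (chanN W N X)))"
    by (simp add: map_bind_pmf map_pmf_comp)
  also have "\<dots> = map_pmf (map snd) (iid (joint_XZ L qX W) N)"
    by (simp add: Xi_chan map_pmf_comp)
  also have "\<dots> = iid (qZ L qX W) N" by (simp add: qZ_def iid_map)
  finally show ?thesis .
qed

lemma fst_XZX: "l < L \<Longrightarrow> map_pmf fst (XZX L qX W l) = qX l"
proof -
  assume l: "l < L"
  have "map_pmf fst (XZX L qX W l) = map_pmf (\<lambda>w. fst w ! l) (joint_XZ L qX W)"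
    unfolding XZX_def by (simp add: map_pmf_comp case_prod_beta)
  also have "\<dots> = bind_pmf (seq_pmf (map qX [0..<L])) (\<lambda>xs. return_pmf (xs ! l))"
    unfolding joint_XZ_def by (simp add: map_bind_pmf map_pmf_comp)
  also have "\<dots> = map_pmf (\<lambda>xs. xs ! l) (seq_pmf (map qX [0..<L]))" by (simp add: map_pmf_def)
  also have "\<dots> = qX l" using l by (simp add: seq_pmf_proj)
  finally show ?thesis .
qed

lemma final_arith:
  assumes L: "L \<ge> 2" and N: "N \<ge> 1" and k: "k \<ge> 1" and \<delta>: "\<delta> \<ge> 0"
  shows "real (k - 1) * (2 * (real L * \<delta>) + real L * (2 / real N + 2 powr (- real N * \<xi> / 2))) + real k * (real L * \<delta>)
         \<le> real (k - 1) * delta2 L N \<xi> \<delta> k + real k * delta_star L N \<xi> \<delta> k"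
proof -
  define d0 where "d0 = delta0 L N \<xi>"
  have p1: "(2::real) powr (real L / 2) \<ge> 1" by (rule ge_one_powr_ge_zero) auto
  have p0: "(2::real) powr (- real N * \<xi> / 2) \<ge> 0" by simp
  have "2 powr (- real N * \<xi> / 2) \<le> 2 powr (real L / 2) * 2 powr (- real N * \<xi> / 2)"
    using p1 p0 by (simp add: mult_le_cancel_right1)
  then have d0ge: "d0 \<ge> 2 / real N + 2 powr (- real N * \<xi> / 2)"
    unfolding d0_def delta0_def by (simp add: algebra_simps)
  have d00: "d0 \<ge> 0" using d0ge p0 N by (smt (verit) divide_nonneg_nonneg of_nat_0_le_iff)
  have Lr: "real L \<ge> 2" using L by simp
  have ds: "delta_star L N \<xi> \<delta> j \<ge> real L * (\<delta> + d0)" if j: "j \<ge> 1" for j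
  proof -
    have "real L ^ j \<ge> real L ^ 1" using Lr j by (intro power_increasing) auto
    then have q: "(real L ^ j - 1) / (real L - 1) \<ge> 1" using Lr by (simp add: le_divide_eq)
    have "real L * (\<delta> + d0) * 1 \<le> real L * (\<delta> + d0) * ((real L ^ j - 1) / (real L - 1))"
      using q \<delta> d00 Lr by (intro mult_left_mono) auto
    moreover have "real L ^ (j + 1) * \<delta> \<ge> 0" using \<delta> by simp
    ultimately show ?thesis unfolding delta_star_def d0_def[symmetric] by (simp add: mult.assoc)
  qed
  have A: "real k * (real L * \<delta>) \<le> real k * delta_star L N \<xi> \<delta> k"
  proof (intro mult_left_mono)
    show "real L * \<delta> \<le> delta_star L N \<xi> \<delta> k" using ds[OF k] d00 Lr
      by (smt (verit) mult_left_mono of_nat_0_le_iff)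
  qed simp
  show ?thesis
  proof (cases "k = 1")
    case True then show ?thesis using A by simp
  next
    case False
    then have k2: "k \<ge> 2" using k by simp
    have "(2::real) ^ (k - 1) \<ge> 2 ^ 1" using k2 by (intro power_increasing) auto
    then have t1: "(2::real) ^ (k - 1) - 1 \<ge> 1" by simp
    have dsk: "delta_star L N \<xi> \<delta> (k - 1) \<ge> real L * (\<delta> + d0)" using k2 by (intro ds) auto
    have "4 * delta_star L N \<xi> \<delta> (k - 1) + 2 * d0 \<ge> 0" using dsk \<delta> d00 Lr
      by (smt (verit) mult_nonneg_nonneg of_nat_0_le_iff)
    then have "delta2 L N \<xi> \<delta> k \<ge> 1 * (4 * delta_star L N \<xi> \<delta> (k - 1) + 2 * d0)"
      unfolding delta2_def d0_def[symmetric] using t1 by (intro mult_right_mono) auto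
    also have "1 * (4 * delta_star L N \<xi> \<delta> (k - 1) + 2 * d0) \<ge> 2 * (real L * \<delta>) + real L * (2 / real N + 2 powr (- real N * \<xi> / 2))"
    proof -
      have "real L * d0 \<ge> real L * (2 / real N + 2 powr (- real N * \<xi> / 2))" using d0ge by (intro mult_left_mono) auto
      moreover have "real L * \<delta> \<ge> 0" using \<delta> by simp
      moreover have "real L * d0 \<ge> 0" using d00 by simp
      moreover have "real L * (\<delta> + d0) = real L * \<delta> + real L * d0" by (simp add: algebra_simps)
      moreover have gen: "x \<le> b \<Longrightarrow> 0 \<le> a \<Longrightarrow> 0 \<le> b \<Longrightarrow> a + b \<le> D \<Longrightarrow> 0 \<le> d \<Longrightarrow> 2 * a + x \<le> 1 * (4 * D + 2 * d)"
        for a b x D d :: real by (simp only: mult_1)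
      ultimately show ?thesis using dsk d00 by (metis (no_types, lifting))
    qed
    finally have B: "2 * (real L * \<delta>) + real L * (2 / real N + 2 powr (- real N * \<xi> / 2)) \<le> delta2 L N \<xi> \<delta> k" .
    have "real (k - 1) * (2 * (real L * \<delta>) + real L * (2 / real N + 2 powr (- real N * \<xi> / 2))) \<le> real (k - 1) * delta2 L N \<xi> \<delta> k"
      using B by (intro mult_left_mono) auto
    then show ?thesis using A by linarith
  qed
qed

theorem lemma14:
  fixes L N k :: nat and \<xi> \<delta> :: real
    and qX :: "nat \<Rightarrow> bool pmf"
    and W :: "bool list \<Rightarrow> 'z::finite pmf"
    and Hf :: "nat \<Rightarrow> (bool list \<Rightarrow> bool list) set"
    and e :: "nat \<Rightarrow> bool list \<Rightarrow> bool list"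
    and r a m :: "nat \<Rightarrow> nat"
  assumes "L \<ge> 2" and "N \<ge> 1" and "k \<ge> 1" and "\<xi> > 0"
    and "\<forall>l<L. real (r l) = real N * (cond_entropy_pmf (XZX L qX W l) - eps2 L N \<xi> / 2)"
    and "\<forall>l<L. real (a l) = real N * (shannon_H (qX l) + eps2 L N \<xi> / 2)"
    and "\<forall>l<L. real (m l) = real N * (mutual_info_pmf (XZX L qX W l) + eps2 L N \<xi>)"
    and "\<forall>l<L. two_universal N (r l) (Hf l)"
    and "\<forall>l<L. \<forall>E. length E = a l \<longrightarrow> length (e l E) = N"
    and "\<forall>l<L. vdist (map_pmf (e l) (unif_bits (a l))) (iid (qX l) N) \<le> \<delta>"
  shows "vdist (scheme_output L e a m W N Hf k) (iid (qZ L qX W) (k * N))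
           \<le> real (k - 1) * delta2 L N \<xi> \<delta> k + real k * delta_star L N \<xi> \<delta> k"
proof -
  note L = assms(1) and N = assms(2) and k = assms(3)
  have r: "\<And>l. l < L \<Longrightarrow> real (r l) = real N * (cond_entropy_pmf (XZX L qX W l) - eps2 L N \<xi> / 2)" using assms(5) by auto
  have tu: "\<And>l. l < L \<Longrightarrow> two_universal N (r l) (Hf l)" using assms(8) by auto
  have enc: "\<And>l. l < L \<Longrightarrow> vdist (map_pmf (e l) (unif_bits (a l))) (iid (qX l) N) \<le> \<delta>" using assms(10) by auto
  have arm: "a l = r l + m l" if l: "l < L" for l
  proof -
    have h5: "real (r l) = real N * (cond_entropy_pmf (XZX L qX W l) - eps2 L N \<xi> / 2)" using assms(5) l by auto
    have h7: "real (m l) = real N * (mutual_info_pmf (XZX L qX W l) + eps2 L N \<xi>)" using assms(7) l by auto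
    have "real (r l) + real (m l) = real N * (cond_entropy_pmf (XZX L qX W l) + mutual_info_pmf (XZX L qX W l) + eps2 L N \<xi> / 2)"
      unfolding h5 h7 by (simp add: field_simps)
    also have "cond_entropy_pmf (XZX L qX W l) + mutual_info_pmf (XZX L qX W l) = shannon_H (qX l)"
      using fst_XZX[OF l, of qX W] by (simp add: cond_entropy_pmf_def mutual_info_pmf_def)
    also have "real N * (shannon_H (qX l) + eps2 L N \<xi> / 2) = real (a l)" using assms(6) l by simp
    finally show ?thesis by linarith
  qed
  have \<delta>0: "\<delta> \<ge> 0" using enc[of 0] L vdist_nonneg by (meson le_less_trans less_le_trans order.trans zero_less_numeral not_le pos2)
  define B where "B = first_block L e a"
  define Q1 where "Q1 = bind_pmf B (chanN W N)"
  define R where "R = bind_pmf (Pg L Hf) (\<lambda>G. bind_pmf B (\<lambda>X. Fb L e m W N G (k - 1) X))"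
  define \<epsilon> where "\<epsilon> = 2 * (real L * \<delta>) + real L * (2 / real N + 2 powr (- real N * \<xi> / 2))"
  have fHf: "finite (Hf l) \<and> Hf l \<noteq> {}" if "l < L" for l using tu[OF that] by (simp add: two_universal_def)
  have fPg: "finite (set_pmf (Pg L Hf))" using fHf by (intro fin_Pg) auto
  have fB: "finite (set_pmf B)" by (simp add: B_def fin_first_block)
  have fQ1: "finite (set_pmf Q1)" using fB fin_chanN[of W N] by (simp add: Q1_def)
  have fF: "\<And>G n X. finite (set_pmf (Fb L e m W N G n X))" by (rule fin_Fb)
  have fR: "finite (set_pmf R)" using fPg fB fF by (simp add: R_def)
  have fqZ: "finite (set_pmf (qZ L qX W))" unfolding qZ_def using fin_joint[of L qX W] by simp
  have fIZ: "finite (set_pmf (iid (qZ L qX W) N))" by (rule finite_iid[OF fqZ])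
  have fI: "finite (set_pmf (seq_pmf (replicate j Q1)))" for j using fQ1 by (intro finite_seq_pmf) auto
  have fIZs: "finite (set_pmf (seq_pmf (replicate j (iid (qZ L qX W) N))))" for j using fIZ by (intro finite_seq_pmf) auto
  have kk: "Suc (k - 1) = k" using k by simp
  have eS: "scheme_output L e a m W N Hf k = map_pmf concat R"
    unfolding scheme_output_def R_def B_def Fb_def Pg_def by (simp add: map_bind_pmf map_pmf_comp)
  have eZ: "iid (qZ L qX W) (k * N) = map_pmf concat (seq_pmf (replicate k (iid (qZ L qX W) N)))"
    by (rule iid_concat[symmetric])
  have v1: "vdist R (seq_pmf (replicate k Q1)) \<le> real (k - 1) * \<epsilon>"
    using main_induction[OF L N r tu enc arm, where n = "k - 1"] unfolding kk by (simp add: R_def B_def Q1_def \<epsilon>_def)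
  have vQ: "vdist Q1 (iid (qZ L qX W) N) \<le> real L * \<delta>"
  proof -
    have "vdist Q1 (iid (qZ L qX W) N) = vdist (bind_pmf B (chanN W N)) (bind_pmf (Xi L qX N) (chanN W N))"
      by (simp add: Q1_def chan_iid)
    also have "\<dots> \<le> vdist B (Xi L qX N)"
      using fB fin_Xi fin_chanN by (intro vdist_bind_left) auto
    also have "\<dots> \<le> real L * \<delta>" unfolding B_def by (rule vdist_B_Xi[OF enc])
    finally show ?thesis .
  qed
  have v2: "vdist (seq_pmf (replicate k Q1)) (seq_pmf (replicate k (iid (qZ L qX W) N))) \<le> real k * (real L * \<delta>)"
  proof -
    have "vdist (seq_pmf (replicate k Q1)) (seq_pmf (replicate k (iid (qZ L qX W) N)))
        \<le> (\<Sum>i<length (replicate k Q1). vdist (replicate k Q1 ! i) (replicate k (iid (qZ L qX W) N) ! i))"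
      using fQ1 fIZ by (intro vdist_seq) auto
    also have "\<dots> \<le> (\<Sum>i<k. real L * \<delta>)" unfolding length_replicate using vQ by (intro sum_mono) auto
    finally show ?thesis by simp
  qed
  have "vdist (scheme_output L e a m W N Hf k) (iid (qZ L qX W) (k * N))
      \<le> vdist (map_pmf concat R) (map_pmf concat (seq_pmf (replicate k Q1)))
        + vdist (map_pmf concat (seq_pmf (replicate k Q1))) (map_pmf concat (seq_pmf (replicate k (iid (qZ L qX W) N))))"
    unfolding eS eZ using fR fI fIZs by (intro vdist_triangle) auto
  also have "\<dots> \<le> vdist R (seq_pmf (replicate k Q1)) + vdist (seq_pmf (replicate k Q1)) (seq_pmf (replicate k (iid (qZ L qX W) N)))"
    using fR fI fIZs by (intro add_mono vdist_map)
  also have "\<dots> \<le> real (k - 1) * \<epsilon> + real k * (real L * \<delta>)" using v1 v2 by (rule add_mono)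
  also have "\<dots> \<le> real (k - 1) * delta2 L N \<xi> \<delta> k + real k * delta_star L N \<xi> \<delta> k"
    unfolding \<epsilon>_def by (rule final_arith[OF L N k \<delta>0])
  finally show ?thesis .
qed

end
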